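(* In the grouped model, for every $I\in\mathcal I$ and every $k=1,\dots,K$, $\hat H_{nk}(I)\to H_{0k}(I)$ and $\tilde H_{nk}(I)\to H_{0k}(I)$ almost surely as $n\to\infty$, where $\hat H_n$ is any maximum likelihood estimator and $\tilde H_n$ any naive estimator.
   Context: Setting (grouped model): $K\ge1$ fixed; $(X,Y)$ random with $X\in\mathbb R$, $Y\in\{1,\dots,K\}$; $F_{0k}(t)=P(X\le t,Y=k)$. $C$ is independent of $(X,Y)$ with distribution $G$; $G(I)=\int_{c\in I}dG(c)$. $\mathcal I$ is a countable set of mutually disjoint intervals with $G(I)>0$ for all $I\in\mathcal I$ (and $G(\bigcup_{I\in\mathcal I}I)=1$); $m(I)\in I$ is a chosen point, distinct for distinct intervals, $\mathcal M=\{m(I):I\in\mathcal I\}$, and $I(m)$ is the interval with $m(I(m))=m$. Observed data: $(D,\Delta)$ with $D=\sum_{I}m(I)1\{C\in I\}$, $\Delta_k=1\{X\le C,Y=k\}$ ($k\le K$), $\Delta_{K+1}=1\{X>C\}$; $n$ i.i.d. copies $(D_i,\Delta^i)$. Define $H_{0k}(I)=G(I)^{-1}\int_{c\in I}F_{0k}(c)dG(c)$, $k=1,\dots,K$. $\mathcal H_K$ is the set of $K$-tuples $H=(H_1,\dots,H_K)$ of functions on $\mathcal I$ that are nonnegative, nondecreasing in the order of $m(I)$, and satisfy $H_+(I)=\sum_{k\le K}H_k(I)\le1$; set $H_{K+1}=1-H_+$. Let $M_k(I)=\frac1n\sum_i\Delta_k^i1\{D_i=m(I)\}$ ($k=1,\dots,K+1$),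 $M(I)=\sum_{k=1}^{K+1}M_k(I)$. The maximum likelihood estimator $\hat H_n$ is any maximizer over $\mathcal H_K$ of $l_n^{\rm group}(H)=\sum_{I\in\mathcal I}\sum_{k=1}^{K+1}M_k(I)\log H_k(I)$ (convention $0\log0=0$). The naive estimator $\tilde H_n$ has $k$th component any maximizer over $\mathcal H_1$ (the case $K=1$) of $l_{nk}^{\rm group}(H_k)=\sum_{I\in\mathcal I}[M_k(I)\log H_k(I)+\{M(I)-M_k(I)\}\log\{1-H_k(I)\}]$. *)

theory Defs
  imports "HOL-Probability.Probability"
begin

text \<open>Intervals are represented
as sets of reals (II is the collection of intervals), m is the chosen-point map,
risk indices are k = 1..K, and index K+1 is the survival ("no failure") category.\<close>

text \<open>Observed group point: D = sum over I of m(I) 1{C in I}; since the intervals are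
disjoint, at most one summand is nonzero.\<close>
definition grp_D :: "real set set \<Rightarrow> (real set \<Rightarrow> real) \<Rightarrow> real \<Rightarrow> real" where
  "grp_D II m c = (if \<exists>I\<in>II. c \<in> I then m (THE I. I \<in> II \<and> c \<in> I) else 0)"

definition grp_Delta :: "nat \<Rightarrow> nat \<Rightarrow> real \<Rightarrow> nat \<Rightarrow> real \<Rightarrow> real" where
  "grp_Delta K k x y c =
     (if k = K + 1 then (if x > c then 1 else 0)
      else (if x \<le> c \<and> y = k then 1 else 0))"

definition grp_M :: "nat \<Rightarrow> real set set \<Rightarrow> (real set \<Rightarrow> real) \<Rightarrow> (nat \<Rightarrow> 'a \<Rightarrow> real)
    \<Rightarrow> (nat \<Rightarrow> 'a \<Rightarrow> nat) \<Rightarrow> (nat \<Rightarrow> 'a \<Rightarrow> real) \<Rightarrow> nat \<Rightarrow> nat \<Rightarrow> 'a \<Rightarrow> real set \<Rightarrow> real" where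
  "grp_M K II m X Y C k n \<omega> I =
     (1 / real n) * (\<Sum>i<n. grp_Delta K k (X i \<omega>) (Y i \<omega>) (C i \<omega>) *
                             (if grp_D II m (C i \<omega>) = m I then 1 else 0))"

definition grp_Mtot :: "nat \<Rightarrow> real set set \<Rightarrow> (real set \<Rightarrow> real) \<Rightarrow> (nat \<Rightarrow> 'a \<Rightarrow> real)
    \<Rightarrow> (nat \<Rightarrow> 'a \<Rightarrow> nat) \<Rightarrow> (nat \<Rightarrow> 'a \<Rightarrow> real) \<Rightarrow> nat \<Rightarrow> 'a \<Rightarrow> real set \<Rightarrow> real" where
  "grp_Mtot K II m X Y C n \<omega> I = (\<Sum>k=1..K+1. grp_M K II m X Y C k n \<omega> I)"

definition grp_class :: "nat \<Rightarrow> real set set \<Rightarrow> (real set \<Rightarrow> real) \<Rightarrow> (nat \<Rightarrow> real set \<Rightarrow> real) set" where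
  "grp_class K II m = {H.
      (\<forall>k\<in>{1..K}. \<forall>I\<in>II. 0 \<le> H k I) \<and>
      (\<forall>k\<in>{1..K}. \<forall>I\<in>II. \<forall>J\<in>II. m I \<le> m J \<longrightarrow> H k I \<le> H k J) \<and>
      (\<forall>I\<in>II. (\<Sum>k=1..K. H k I) \<le> 1)}"

definition grp_Hext :: "nat \<Rightarrow> (nat \<Rightarrow> real set \<Rightarrow> real) \<Rightarrow> nat \<Rightarrow> real set \<Rightarrow> real" where
  "grp_Hext K H k I = (if k = K + 1 then 1 - (\<Sum>j=1..K. H j I) else H k I)"

definition xlog :: "real \<Rightarrow> real \<Rightarrow> ereal" where
  "xlog a b = (if a = 0 then 0 else if b = 0 then -\<infinity> else ereal (a * ln b))"

text \<open>Log-likelihood. Terms with M(I) = 0 vanish, so the sum over II equals the (finite)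
sum over those I with M(I) \<noteq> 0.\<close>
definition grp_loglik :: "nat \<Rightarrow> real set set \<Rightarrow> (real set \<Rightarrow> real) \<Rightarrow> (nat \<Rightarrow> 'a \<Rightarrow> real)
    \<Rightarrow> (nat \<Rightarrow> 'a \<Rightarrow> nat) \<Rightarrow> (nat \<Rightarrow> 'a \<Rightarrow> real) \<Rightarrow> nat \<Rightarrow> 'a \<Rightarrow> (nat \<Rightarrow> real set \<Rightarrow> real) \<Rightarrow> ereal" where
  "grp_loglik K II m X Y C n \<omega> H =
     (\<Sum>I\<in>{I\<in>II. grp_Mtot K II m X Y C n \<omega> I \<noteq> 0}.
        \<Sum>k=1..K+1. xlog (grp_M K II m X Y C k n \<omega> I) (grp_Hext K H k I))"

definition grp_loglik_naive :: "nat \<Rightarrow> real set set \<Rightarrow> (real set \<Rightarrow> real) \<Rightarrow> (nat \<Rightarrow> 'a \<Rightarrow> real)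
    \<Rightarrow> (nat \<Rightarrow> 'a \<Rightarrow> nat) \<Rightarrow> (nat \<Rightarrow> 'a \<Rightarrow> real) \<Rightarrow> nat \<Rightarrow> nat \<Rightarrow> 'a \<Rightarrow> (real set \<Rightarrow> real) \<Rightarrow> ereal" where
  "grp_loglik_naive K II m X Y C k n \<omega> h =
     (\<Sum>I\<in>{I\<in>II. grp_Mtot K II m X Y C n \<omega> I \<noteq> 0}.
        xlog (grp_M K II m X Y C k n \<omega> I) (h I) +
        xlog (grp_Mtot K II m X Y C n \<omega> I - grp_M K II m X Y C k n \<omega> I) (1 - h I))"

definition grp_F0 :: "'a measure \<Rightarrow> ('a \<Rightarrow> real) \<Rightarrow> ('a \<Rightarrow> nat) \<Rightarrow> nat \<Rightarrow> real \<Rightarrow> real" where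
  "grp_F0 P X Y k t = measure P {\<omega> \<in> space P. X \<omega> \<le> t \<and> Y \<omega> = k}"

definition grp_H0 :: "'a measure \<Rightarrow> ('a \<Rightarrow> real) \<Rightarrow> ('a \<Rightarrow> nat) \<Rightarrow> real measure \<Rightarrow> nat \<Rightarrow> real set \<Rightarrow> real" where
  "grp_H0 P X Y G k I = (LINT c:I|G. grp_F0 P X Y k c) / measure G I"

end

theory Submission
  imports Defs "HOL-Probability.Probability"
begin


lemma slln_01:
  fixes Z :: "nat \<Rightarrow> 'a \<Rightarrow> real"
  assumes P: "prob_space P"
    and ind: "prob_space.indep_vars P (\<lambda>_. borel) Z UNIV"
    and rng: "\<And>i \<omega>. \<omega> \<in> space P \<Longrightarrow> Z i \<omega> \<in> {0..1}"
    and ex: "\<And>i. prob_space.expectation P (Z i) = p"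
  shows "AE \<omega> in P. (\<lambda>n. (1 / real n) * (\<Sum>i<n. Z i \<omega>)) \<longlonglongrightarrow> p"
proof -
  interpret prob_space P by fact
  have meas[measurable]: "Z i \<in> borel_measurable P" for i
    using ind unfolding indep_vars_def by auto
  have key: "AE \<omega> in P. eventually (\<lambda>n. \<bar>(1 / real n) * (\<Sum>i<n. Z i \<omega>) - p\<bar> < e) sequentially"
    if e: "e > 0" for e
  proof -
    define A where "A n = {\<omega>\<in>space P. \<bar>(\<Sum>i<n. Z i \<omega>) - real n * p\<bar> \<ge> real n * e}" for n
    have Am[measurable]: "A n \<in> sets P" for n unfolding A_def by measurable
    have bnd: "measure P (A n) \<le> 2 * exp (-2 * e\<^sup>2) ^ n" for n
    proof (cases "n = 0")
      case True have "prob (A n) \<le> 1" by (rule prob_le_1) moreover have "2 * exp (-2 * e\<^sup>2) ^ n = 2" using True by simp ultimately show ?thesis by linarith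
    next
      case False
      interpret H: Hoeffding_ineq P "{..<n}" Z "\<lambda>_. 0" "\<lambda>_. 1" "real n * p"
      proof unfold_locales
        show "indep_vars (\<lambda>_. borel) Z {..<n}" using indep_vars_subset[OF ind] by auto
        show "AE x in P. Z i x \<in> {0..1}" for i using rng by auto
      qed (auto simp: ex)
      have "measure P (A n) \<le> 2 * exp (-2 * (real n * e)\<^sup>2 / (\<Sum>i<n. (1 - 0)\<^sup>2))"
        unfolding A_def using H.Hoeffding_ineq_abs_ge[of "real n * e"] e False by simp
      also have "\<dots> = 2 * exp (-2 * e\<^sup>2) ^ n"
        using False by (simp add: power2_eq_square exp_of_nat_mult[symmetric] field_simps)
      finally show ?thesis .
    qed
    have "summable (\<lambda>n. measure P (A n))"
    proof (rule summable_comparison_test[where g="\<lambda>n. 2 * exp (-2 * e\<^sup>2) ^ n"])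
      show "\<exists>N. \<forall>n\<ge>N. norm (measure P (A n)) \<le> 2 * exp (-2 * e\<^sup>2) ^ n" using bnd by auto
      show "summable (\<lambda>n. 2 * exp (- 2 * e\<^sup>2) ^ n)"
        using e by (intro summable_mult summable_geometric) auto
    qed
    then have "AE x in P. eventually (\<lambda>n. x \<in> space P - A n) sequentially"
      by (intro borel_cantelli_AE1) (auto simp: less_top[symmetric])
    then show ?thesis
    proof (rule AE_mp, intro AE_I2 impI)
      fix x assume x: "x \<in> space P" and ev: "eventually (\<lambda>n. x \<in> space P - A n) sequentially"
      show "eventually (\<lambda>n. \<bar>(1 / real n) * (\<Sum>i<n. Z i x) - p\<bar> < e) sequentially"
        using ev eventually_gt_at_top[of 0]
      proof eventually_elim
        case (elim n)
        then have "\<bar>(\<Sum>i<n. Z i x) - real n * p\<bar> < real n * e" using x by (auto simp: A_def)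
        moreover have "(1 / real n) * (\<Sum>i<n. Z i x) - p = ((\<Sum>i<n. Z i x) - real n * p) / real n"
          using elim by (simp add: field_simps)
        ultimately show ?case using elim by (simp add: abs_div field_simps)
      qed
    qed
  qed
  have "AE \<omega> in P. \<forall>j::nat. eventually (\<lambda>n. \<bar>(1 / real n) * (\<Sum>i<n. Z i \<omega>) - p\<bar> < 1 / (real j + 1)) sequentially"
  proof (subst AE_all_countable, intro allI)
    fix j :: nat
    have "(0::real) < 1 / (real j + 1)" by simp
    from key[OF this] show "AE \<omega> in P. eventually (\<lambda>n. \<bar>(1 / real n) * (\<Sum>i<n. Z i \<omega>) - p\<bar> < 1 / (real j + 1)) sequentially" .
  qed
  then show ?thesis
  proof (rule AE_mp, intro AE_I2 impI)
    fix \<omega> assume h: "\<forall>j::nat. eventually (\<lambda>n. \<bar>(1 / real n) * (\<Sum>i<n. Z i \<omega>) - p\<bar> < 1 / (real j + 1)) sequentially"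
    show "(\<lambda>n. (1 / real n) * (\<Sum>i<n. Z i \<omega>)) \<longlonglongrightarrow> p"
    proof (rule LIMSEQ_I)
      fix r :: real assume r: "r > 0"
      from reals_Archimedean[OF r] obtain j where j0: "inverse (real (Suc j)) < r" ..
      have j: "1 / (real j + 1) < r" using j0 by (simp add: inverse_eq_divide add.commute)
      from h[rule_format, of j] obtain no where no: "\<And>n. n \<ge> no \<Longrightarrow> \<bar>(1 / real n) * (\<Sum>i<n. Z i \<omega>) - p\<bar> < 1 / (real j + 1)"
        unfolding eventually_sequentially by blast
      have "\<forall>n\<ge>no. norm ((1 / real n) * (\<Sum>i<n. Z i \<omega>) - p) < r"
        using no j by (auto intro: less_trans)
      then show "\<exists>no. \<forall>n\<ge>no. norm ((1 / real n) * (\<Sum>i<n. Z i \<omega>) - p) < r" by blast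
    qed
  qed
qed



lemma ereal_sum_minf:
  fixes f :: "'b \<Rightarrow> ereal"
  assumes "finite A" "i \<in> A" "f i = -\<infinity>" "\<And>j. j \<in> A \<Longrightarrow> f j \<noteq> \<infinity>"
  shows "sum f A = -\<infinity>"
proof -
  have "sum f A = f i + sum f (A - {i})" using assms by (simp add: sum.remove)
  moreover have "sum f (A - {i}) \<noteq> \<infinity>" using assms by (subst sum_Pinfty) auto
  ultimately show ?thesis using assms(3) by simp
qed

lemma xlog_ne_inf: "xlog a b \<noteq> \<infinity>"
  by (simp add: xlog_def)

lemma ln_le_sqrt: "0 < (x::real) \<Longrightarrow> ln x \<le> 2 * (sqrt x - 1)"
proof -
  assume x: "0 < x"
  have "ln x = 2 * ln (sqrt x)" using x by (simp add: ln_sqrt)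
  also have "\<dots> \<le> 2 * (sqrt x - 1)" using ln_le_minus_one[of "sqrt x"] x by simp
  finally show ?thesis .
qed

lemma lik_ineq:
  fixes a Q Ph :: "'b \<Rightarrow> nat \<Rightarrow> real"
  assumes S: "finite S" and KS: "finite KS"
    and a: "\<And>I k. I \<in> S \<Longrightarrow> k \<in> KS \<Longrightarrow> 0 \<le> a I k"
    and Q: "\<And>I k. I \<in> S \<Longrightarrow> k \<in> KS \<Longrightarrow> 0 < Q I k"
    and Ph: "\<And>I k. I \<in> S \<Longrightarrow> k \<in> KS \<Longrightarrow> 0 \<le> Ph I k"
    and le: "(\<Sum>I\<in>S. \<Sum>k\<in>KS. xlog (a I k) (Q I k)) \<le> (\<Sum>I\<in>S. \<Sum>k\<in>KS. xlog (a I k) (Ph I k))"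
  shows "0 \<le> (\<Sum>I\<in>S. \<Sum>k\<in>KS. a I k * (sqrt (Ph I k / Q I k) - 1))"
proof -
  have xq: "xlog (a I k) (Q I k) = ereal (a I k * ln (Q I k))" if "I \<in> S" "k \<in> KS" for I k
    using Q[OF that] by (simp add: xlog_def)
  have LQ: "(\<Sum>I\<in>S. \<Sum>k\<in>KS. xlog (a I k) (Q I k)) = ereal (\<Sum>I\<in>S. \<Sum>k\<in>KS. a I k * ln (Q I k))"
    by (simp add: xq cong: sum.cong)
  have pos: "0 < Ph I k" if "I \<in> S" "k \<in> KS" "a I k \<noteq> 0" for I k
  proof (rule ccontr)
    assume "\<not> 0 < Ph I k"
    with Ph[OF that(1,2)] have "Ph I k = 0" by simp
    then have "xlog (a I k) (Ph I k) = -\<infinity>" using that by (simp add: xlog_def)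
    then have "(\<Sum>k\<in>KS. xlog (a I k) (Ph I k)) = -\<infinity>"
      using KS that by (intro ereal_sum_minf[where i=k]) (auto simp: xlog_ne_inf)
    then have "(\<Sum>I\<in>S. \<Sum>k\<in>KS. xlog (a I k) (Ph I k)) = -\<infinity>"
      using S that KS by (intro ereal_sum_minf[where i=I]) (auto simp: sum_Pinfty xlog_ne_inf)
    with le LQ show False by simp
  qed
  have xp: "xlog (a I k) (Ph I k) = ereal (a I k * ln (Ph I k))" if "I \<in> S" "k \<in> KS" for I k
    using pos[OF that] Ph[OF that] by (cases "a I k = 0") (auto simp: xlog_def)
  have LP: "(\<Sum>I\<in>S. \<Sum>k\<in>KS. xlog (a I k) (Ph I k)) = ereal (\<Sum>I\<in>S. \<Sum>k\<in>KS. a I k * ln (Ph I k))"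
    by (simp add: xp cong: sum.cong)
  have "(\<Sum>I\<in>S. \<Sum>k\<in>KS. a I k * ln (Q I k)) \<le> (\<Sum>I\<in>S. \<Sum>k\<in>KS. a I k * ln (Ph I k))"
    using le LQ LP by simp
  also have "\<dots> \<le> (\<Sum>I\<in>S. \<Sum>k\<in>KS. a I k * ln (Q I k) + 2 * (a I k * (sqrt (Ph I k / Q I k) - 1)))"
  proof (intro sum_mono)
    fix I k assume I: "I \<in> S" and k: "k \<in> KS"
    show "a I k * ln (Ph I k) \<le> a I k * ln (Q I k) + 2 * (a I k * (sqrt (Ph I k / Q I k) - 1))"
    proof (cases "a I k = 0")
      case False
      have p: "0 < Ph I k" "0 < Q I k" using pos[OF I k False] Q[OF I k] by auto
      have "ln (Ph I k) = ln (Q I k) + ln (Ph I k / Q I k)" using p by (simp add: ln_div)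
      moreover have "ln (Ph I k / Q I k) \<le> 2 * (sqrt (Ph I k / Q I k) - 1)"
        using p by (intro ln_le_sqrt) simp
      ultimately have "ln (Ph I k) \<le> ln (Q I k) + 2 * (sqrt (Ph I k / Q I k) - 1)" by simp
      from mult_left_mono[OF this a[OF I k]] show ?thesis by (simp add: algebra_simps)
    qed simp
  qed
  also have "\<dots> = (\<Sum>I\<in>S. \<Sum>k\<in>KS. a I k * ln (Q I k)) + 2 * (\<Sum>I\<in>S. \<Sum>k\<in>KS. a I k * (sqrt (Ph I k / Q I k) - 1))"
    by (simp add: sum.distrib sum_distrib_left)
  finally show ?thesis by simp
qed



lemma det_consist:
  fixes a Ph :: "nat \<Rightarrow> 'b \<Rightarrow> nat \<Rightarrow> real"
    and q :: "'b \<Rightarrow> nat \<Rightarrow> real" and g :: "'b \<Rightarrow> real" and II :: "'b set" and KS :: "nat set"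
  assumes KS: "finite KS" "KS \<noteq> {}"
   and S_fin: "\<And>n. finite {I\<in>II. (\<Sum>k\<in>KS. a n I k) \<noteq> 0}"
   and a_nn: "\<And>n I k. I\<in>II \<Longrightarrow> k\<in>KS \<Longrightarrow> 0 \<le> a n I k"
   and a_sum: "\<And>n F. finite F \<Longrightarrow> F \<subseteq> II \<Longrightarrow> (\<Sum>I\<in>F. \<Sum>k\<in>KS. a n I k) \<le> 1"
   and a_lim: "\<And>I k. I\<in>II \<Longrightarrow> k\<in>KS \<Longrightarrow> (\<lambda>n. a n I k) \<longlonglongrightarrow> g I * q I k"
   and g_pos: "\<And>I. I\<in>II \<Longrightarrow> 0 < g I"
   and g_full: "\<And>\<tau>. 0 < \<tau> \<Longrightarrow> \<exists>F. finite F \<and> F \<subseteq> II \<and> 1 - \<tau> \<le> (\<Sum>I\<in>F. g I)"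
   and q_nn: "\<And>I k. I\<in>II \<Longrightarrow> k\<in>KS \<Longrightarrow> 0 \<le> q I k"
   and q_sum: "\<And>I. I\<in>II \<Longrightarrow> (\<Sum>k\<in>KS. q I k) = 1"
   and Ph_nn: "\<And>n I k. I\<in>II \<Longrightarrow> k\<in>KS \<Longrightarrow> 0 \<le> Ph n I k"
   and Ph_sum: "\<And>n I. I\<in>II \<Longrightarrow> (\<Sum>k\<in>KS. Ph n I k) = 1"
   and opt: "\<And>n \<epsilon>. 0 < \<epsilon> \<Longrightarrow> \<epsilon> < 1 \<Longrightarrow>
      (\<Sum>I\<in>{I\<in>II. (\<Sum>k\<in>KS. a n I k) \<noteq> 0}. \<Sum>k\<in>KS. xlog (a n I k) ((1 - \<epsilon>) * q I k + \<epsilon> / real (card KS)))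
      \<le> (\<Sum>I\<in>{I\<in>II. (\<Sum>k\<in>KS. a n I k) \<noteq> 0}. \<Sum>k\<in>KS. xlog (a n I k) (Ph n I k))"
   and I0: "I0 \<in> II" and k0: "k0 \<in> KS"
  shows "(\<lambda>n. Ph n I0 k0) \<longlonglongrightarrow> q I0 k0"
proof -
  define N where "N = real (card KS)"
  have N: "N > 0" using KS by (simp add: N_def card_gt_0_iff)
  define d where "d n = (\<Sum>k\<in>KS. (sqrt (q I0 k) - sqrt (Ph n I0 k))\<^sup>2)" for n
  have d_nn: "0 \<le> d n" for n unfolding d_def by (intro sum_nonneg) auto
  have Ph_le1: "Ph n I k \<le> 1" if "I \<in> II" "k \<in> KS" for n I k
  proof -
    have "Ph n I k \<le> (\<Sum>k\<in>KS. Ph n I k)"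
      using that KS by (intro member_le_sum Ph_nn) auto
    then show ?thesis using Ph_sum[OF that(1)] by simp
  qed
  have main: "eventually (\<lambda>n. d n \<le> \<delta>) sequentially" if \<delta>: "\<delta> > 0" for \<delta>
  proof -
    define G0 where "G0 = g I0"
    have G0: "G0 > 0" using g_pos[OF I0] by (simp add: G0_def)
    define \<eta> where "\<eta> = G0 * \<delta> / 6"
    have \<eta>: "\<eta> > 0" using G0 \<delta> by (simp add: \<eta>_def)
    define \<epsilon> where "\<epsilon> = 1 - 1 / (1 + \<eta>)\<^sup>2"
    have "1 * 1 < (1 + \<eta>) * (1 + \<eta>)" using \<eta> by (intro mult_strict_mono) auto
    then have "1 / (1 + \<eta>)\<^sup>2 < 1" using \<eta> by (simp add: power2_eq_square)
    then have \<epsilon>0: "0 < \<epsilon>" by (simp add: \<epsilon>_def)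
    have \<epsilon>1: "\<epsilon> < 1" using \<eta> by (simp add: \<epsilon>_def)
    have sq1e: "sqrt (1 - \<epsilon>) = 1 / (1 + \<eta>)"
      using \<eta> by (simp add: \<epsilon>_def real_sqrt_divide)
    define B where "B = sqrt (N / \<epsilon>)"
    have B: "B > 0" using N \<epsilon>0 by (simp add: B_def)
    define \<tau> where "\<tau> = \<eta> / B"
    have \<tau>: "\<tau> > 0" using \<eta> B by (simp add: \<tau>_def)
    obtain F0 where F0: "finite F0" "F0 \<subseteq> II" "1 - \<tau> \<le> (\<Sum>I\<in>F0. g I)" using g_full[OF \<tau>] by blast
    define F where "F = insert I0 F0"
    have F: "finite F" "F \<subseteq> II" "I0 \<in> F" using F0 I0 by (auto simp: F_def)
    have gF: "1 - \<tau> \<le> (\<Sum>I\<in>F. g I)"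
    proof (cases "I0 \<in> F0")
      case True then show ?thesis using F0 by (simp add: F_def insert_absorb)
    next
      case False then show ?thesis using F0 G0 by (simp add: F_def G0_def)
    qed
    define Q where "Q I k = (1 - \<epsilon>) * q I k + \<epsilon> / N" for I k
    define r where "r n I k = sqrt (Ph n I k / Q I k)" for n I k
    have Q_ge: "\<epsilon> / N \<le> Q I k" "(1 - \<epsilon>) * q I k \<le> Q I k" if "I \<in> II" "k \<in> KS" for I k
      using q_nn[OF that] \<epsilon>1 \<epsilon>0 N by (auto simp: Q_def)
    have Q_pos: "0 < Q I k" if "I \<in> II" "k \<in> KS" for I k
      using Q_ge[OF that] \<epsilon>0 N by (smt (verit) divide_pos_pos)
    have r_nn: "0 \<le> r n I k" if "I \<in> II" "k \<in> KS" for n I k using Ph_nn[OF that] Q_pos[OF that] by (simp add: r_def)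
    have r_le: "r n I k \<le> B" if "I \<in> II" "k \<in> KS" for n I k
    proof -
      have "Ph n I k / Q I k \<le> 1 / (\<epsilon> / N)"
        using Ph_le1[OF that] Ph_nn[OF that] Q_ge[OF that] Q_pos[OF that] \<epsilon>0 N
        by (intro frac_le) auto
      then show ?thesis by (simp add: r_def B_def)
    qed
    have star: "0 \<le> (\<Sum>I\<in>F. \<Sum>k\<in>KS. a n I k * (r n I k - 1)) + B * (1 - (\<Sum>I\<in>F. \<Sum>k\<in>KS. a n I k))" for n
    proof -
      define S where "S = {I\<in>II. (\<Sum>k\<in>KS. a n I k) \<noteq> 0}"
      have S: "finite S" "S \<subseteq> II" using S_fin[of n] by (auto simp: S_def)
      define T where "T I = (\<Sum>k\<in>KS. a n I k * (r n I k - 1))" for I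
      have "0 \<le> (\<Sum>I\<in>S. T I)"
        unfolding T_def r_def
      proof (rule lik_ineq[OF S(1) KS(1)])
        show "(\<Sum>I\<in>S. \<Sum>k\<in>KS. xlog (a n I k) (Q I k)) \<le> (\<Sum>I\<in>S. \<Sum>k\<in>KS. xlog (a n I k) (Ph n I k))"
          using opt[OF \<epsilon>0 \<epsilon>1, of n] by (simp add: S_def Q_def N_def)
      qed (use S a_nn Q_pos Ph_nn in auto)
      also have "(\<Sum>I\<in>S. T I) = (\<Sum>I\<in>S \<inter> F. T I) + (\<Sum>I\<in>S - F. T I)"
        using S(1) by (rule sum.Int_Diff)
      also have "(\<Sum>I\<in>S \<inter> F. T I) = (\<Sum>I\<in>F. T I)"
      proof (rule sum.mono_neutral_left[OF F(1)])
        show "\<forall>i\<in>F - S \<inter> F. T i = 0"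
        proof
          fix I assume I: "I \<in> F - S \<inter> F"
          then have "(\<Sum>k\<in>KS. a n I k) = 0" "I \<in> II" using F by (auto simp: S_def)
          then have "\<forall>k\<in>KS. a n I k = 0" using sum_nonneg_eq_0_iff[OF KS(1)] a_nn by blast
          then show "T I = 0" by (simp add: T_def)
        qed
      qed auto
      also have "(\<Sum>I\<in>S - F. T I) \<le> (\<Sum>I\<in>S - F. B * (\<Sum>k\<in>KS. a n I k))"
        unfolding T_def sum_distrib_left
      proof (intro sum_mono)
        fix I k assume "I \<in> S - F" "k \<in> KS"
        then have "I \<in> II" "k \<in> KS" using S by auto
        then show "a n I k * (r n I k - 1) \<le> B * a n I k"
          using r_le[of I k n] a_nn[of I k n] r_nn[of I k n]
          by (smt (verit, ccfv_SIG) mult.commute mult_left_mono)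
      qed
      also have "\<dots> = B * (\<Sum>I\<in>S - F. \<Sum>k\<in>KS. a n I k)" by (simp add: sum_distrib_left)
      also have "(\<Sum>I\<in>S - F. \<Sum>k\<in>KS. a n I k) \<le> 1 - (\<Sum>I\<in>F. \<Sum>k\<in>KS. a n I k)"
      proof -
        have "(\<Sum>I\<in>S - F. \<Sum>k\<in>KS. a n I k) + (\<Sum>I\<in>F. \<Sum>k\<in>KS. a n I k) = (\<Sum>I\<in>(S - F) \<union> F. \<Sum>k\<in>KS. a n I k)"
          using S F by (intro sum.union_disjoint[symmetric]) auto
        also have "\<dots> \<le> 1" using S F by (intro a_sum) auto
        finally show ?thesis by simp
      qed
      finally show ?thesis using B unfolding T_def by (smt (verit) mult_left_mono)
    qed
    have bndI: "(\<Sum>k\<in>KS. q I k * r n I k) \<le> (1 + \<eta>) * (1 - (\<Sum>k\<in>KS. (sqrt (q I k) - sqrt (Ph n I k))\<^sup>2) / 2)"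
      if I: "I \<in> II" for n I
    proof -
      have "(\<Sum>k\<in>KS. q I k * r n I k) \<le> (\<Sum>k\<in>KS. (1 + \<eta>) * (sqrt (q I k) * sqrt (Ph n I k)))"
      proof (intro sum_mono)
        fix k assume k: "k \<in> KS"
        show "q I k * r n I k \<le> (1 + \<eta>) * (sqrt (q I k) * sqrt (Ph n I k))"
        proof (cases "q I k = 0")
          case False
          then have qp: "q I k > 0" using q_nn[OF I k] by simp
          have "Ph n I k / Q I k \<le> Ph n I k / ((1 - \<epsilon>) * q I k)"
            using Q_ge[OF I k] Q_pos[OF I k] qp \<epsilon>1 Ph_nn[OF I k] by (intro divide_left_mono) (auto intro!: mult_pos_pos)
          then have "r n I k \<le> sqrt (Ph n I k / ((1 - \<epsilon>) * q I k))" by (simp add: r_def)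
          also have "\<dots> = (1 + \<eta>) * sqrt (Ph n I k) / sqrt (q I k)"
            using sq1e \<eta> by (simp add: real_sqrt_divide real_sqrt_mult)
          finally have "q I k * r n I k \<le> q I k * ((1 + \<eta>) * sqrt (Ph n I k) / sqrt (q I k))"
            using qp by (intro mult_left_mono) auto
          also have "\<dots> = (1 + \<eta>) * (sqrt (q I k) * sqrt (Ph n I k))"
          proof -
            have "q I k * ((1 + \<eta>) * sqrt (Ph n I k) / sqrt (q I k)) = (q I k / sqrt (q I k)) * ((1 + \<eta>) * sqrt (Ph n I k))"
              by simp
            also have "q I k / sqrt (q I k) = sqrt (q I k)" using qp by (simp add: real_div_sqrt)
            finally show ?thesis by simp
          qed
          finally show ?thesis .
        qed (use \<eta> in simp)
      qed
      also have "\<dots> = (1 + \<eta>) * (\<Sum>k\<in>KS. sqrt (q I k) * sqrt (Ph n I k))" by (simp add: sum_distrib_left)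
      also have "(\<Sum>k\<in>KS. sqrt (q I k) * sqrt (Ph n I k)) = 1 - (\<Sum>k\<in>KS. (sqrt (q I k) - sqrt (Ph n I k))\<^sup>2) / 2"
      proof -
        have "(\<Sum>k\<in>KS. (sqrt (q I k) - sqrt (Ph n I k))\<^sup>2) = (\<Sum>k\<in>KS. q I k + Ph n I k - 2 * (sqrt (q I k) * sqrt (Ph n I k)))"
          using q_nn[OF I] Ph_nn[OF I] by (intro sum.cong) (auto simp: power2_diff)
        also have "\<dots> = 2 - 2 * (\<Sum>k\<in>KS. sqrt (q I k) * sqrt (Ph n I k))"
          using q_sum[OF I] Ph_sum[OF I] by (simp add: sum.distrib sum_subtractf sum_distrib_left)
        finally show ?thesis by linarith
      qed
      finally show ?thesis .
    qed
    have gF1: "(\<Sum>I\<in>F. g I) \<le> 1"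
    proof -
      have "(\<lambda>n. \<Sum>I\<in>F. \<Sum>k\<in>KS. a n I k) \<longlonglongrightarrow> (\<Sum>I\<in>F. \<Sum>k\<in>KS. g I * q I k)"
        using F by (intro tendsto_sum a_lim) auto
      moreover have "(\<Sum>I\<in>F. \<Sum>k\<in>KS. g I * q I k) = (\<Sum>I\<in>F. g I)"
        using F q_sum by (simp add: sum_distrib_left[symmetric] subset_iff)
      ultimately have "(\<lambda>n. \<Sum>I\<in>F. \<Sum>k\<in>KS. a n I k) \<longlonglongrightarrow> (\<Sum>I\<in>F. g I)" by simp
      then show ?thesis by (rule LIMSEQ_le_const2) (use F a_sum in auto)
    qed
    define U where "U n = (B + 1) * (\<Sum>I\<in>F. \<Sum>k\<in>KS. \<bar>a n I k - g I * q I k\<bar>)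
        + B * \<bar>(\<Sum>I\<in>F. \<Sum>k\<in>KS. a n I k) - (\<Sum>I\<in>F. g I)\<bar>" for n
    have U0: "U \<longlonglongrightarrow> 0"
    proof -
      have l1: "(\<lambda>n. \<Sum>I\<in>F. \<Sum>k\<in>KS. \<bar>a n I k - g I * q I k\<bar>) \<longlonglongrightarrow> (\<Sum>I\<in>F. \<Sum>k\<in>KS. \<bar>g I * q I k - g I * q I k\<bar>)"
        using F by (intro tendsto_sum tendsto_rabs tendsto_diff a_lim tendsto_const) auto
      have l2: "(\<lambda>n. \<Sum>I\<in>F. \<Sum>k\<in>KS. a n I k) \<longlonglongrightarrow> (\<Sum>I\<in>F. \<Sum>k\<in>KS. g I * q I k)"
        using F by (intro tendsto_sum a_lim) auto
      have "(\<Sum>I\<in>F. \<Sum>k\<in>KS. g I * q I k) = (\<Sum>I\<in>F. g I)"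
        using F q_sum by (simp add: sum_distrib_left[symmetric] subset_iff)
      with l2 have l2': "(\<lambda>n. \<bar>(\<Sum>I\<in>F. \<Sum>k\<in>KS. a n I k) - (\<Sum>I\<in>F. g I)\<bar>) \<longlonglongrightarrow> \<bar>(\<Sum>I\<in>F. g I) - (\<Sum>I\<in>F. g I)\<bar>"
        by (intro tendsto_rabs tendsto_diff tendsto_const) auto
      have "U \<longlonglongrightarrow> (B + 1) * (\<Sum>I\<in>F. \<Sum>k\<in>KS. \<bar>g I * q I k - g I * q I k\<bar>) + B * \<bar>(\<Sum>I\<in>F. g I) - (\<Sum>I\<in>F. g I)\<bar>"
        unfolding U_def by (intro tendsto_add tendsto_mult tendsto_const l1 l2')
      then show ?thesis by simp
    qed
    have evU: "eventually (\<lambda>n. U n < \<eta>) sequentially"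
      using U0 \<eta> by (simp add: order_tendsto_iff)
    show ?thesis using evU
    proof eventually_elim
      case (elim n)
      define E1 where "E1 = (\<Sum>I\<in>F. \<Sum>k\<in>KS. (a n I k - g I * q I k) * (r n I k - 1))"
      have split: "(\<Sum>I\<in>F. \<Sum>k\<in>KS. a n I k * (r n I k - 1)) = E1 + (\<Sum>I\<in>F. g I * ((\<Sum>k\<in>KS. q I k * r n I k) - 1))"
      proof -
        have "(\<Sum>I\<in>F. \<Sum>k\<in>KS. a n I k * (r n I k - 1)) = (\<Sum>I\<in>F. \<Sum>k\<in>KS. (a n I k - g I * q I k) * (r n I k - 1) + g I * (q I k * r n I k - q I k))"
          by (intro sum.cong refl) (simp add: algebra_simps)
        also have "\<dots> = E1 + (\<Sum>I\<in>F. g I * ((\<Sum>k\<in>KS. q I k * r n I k) - (\<Sum>k\<in>KS. q I k)))"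
          by (simp add: E1_def sum.distrib sum_distrib_left sum_subtractf right_diff_distrib)
        also have "\<dots> = E1 + (\<Sum>I\<in>F. g I * ((\<Sum>k\<in>KS. q I k * r n I k) - 1))"
          using F q_sum by (intro arg_cong2[where f="(+)"] sum.cong refl) (auto simp: subset_iff)
        finally show ?thesis .
      qed
      define dI where "dI I = (\<Sum>k\<in>KS. (sqrt (q I k) - sqrt (Ph n I k))\<^sup>2)" for I
      have dI_nn: "0 \<le> dI I" for I unfolding dI_def by (intro sum_nonneg) auto
      have "(\<Sum>I\<in>F. g I * ((\<Sum>k\<in>KS. q I k * r n I k) - 1)) \<le> (\<Sum>I\<in>F. \<eta> * g I - g I * dI I / 2)"
      proof (intro sum_mono)
        fix I assume I: "I \<in> F"
        then have I': "I \<in> II" using F by auto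
        have "(\<Sum>k\<in>KS. q I k * r n I k) - 1 \<le> (1 + \<eta>) * (1 - dI I / 2) - 1"
          using bndI[OF I', of n] by (simp add: dI_def)
        also have "\<dots> \<le> \<eta> - dI I / 2" using \<eta> dI_nn[of I] by (simp add: algebra_simps)
        finally show "g I * ((\<Sum>k\<in>KS. q I k * r n I k) - 1) \<le> \<eta> * g I - g I * dI I / 2"
          using g_pos[OF I'] by (smt (verit) mult_left_mono right_diff_distrib mult.commute times_divide_eq_right)
      qed
      also have "\<dots> = \<eta> * (\<Sum>I\<in>F. g I) - (\<Sum>I\<in>F. g I * dI I) / 2"
        by (simp add: sum_subtractf sum_distrib_left sum_divide_distrib)
      finally have mb0: "(\<Sum>I\<in>F. g I * ((\<Sum>k\<in>KS. q I k * r n I k) - 1)) \<le> \<eta> * (\<Sum>I\<in>F. g I) - (\<Sum>I\<in>F. g I * dI I) / 2" .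
      have "(\<Sum>I\<in>F. g I * dI I) \<ge> g I0 * dI I0"
        using F g_pos dI_nn by (intro member_le_sum) (auto intro: mult_nonneg_nonneg less_imp_le)
      moreover have "g I0 * dI I0 = G0 * d n" by (simp add: G0_def dI_def d_def)
      ultimately have mainb: "(\<Sum>I\<in>F. g I * ((\<Sum>k\<in>KS. q I k * r n I k) - 1)) \<le> \<eta> * (\<Sum>I\<in>F. g I) - G0 * d n / 2"
        using mb0 by linarith
      have E1b: "\<bar>E1\<bar> \<le> (B + 1) * (\<Sum>I\<in>F. \<Sum>k\<in>KS. \<bar>a n I k - g I * q I k\<bar>)"
      proof -
        have "\<bar>E1\<bar> \<le> (\<Sum>I\<in>F. \<Sum>k\<in>KS. \<bar>(a n I k - g I * q I k) * (r n I k - 1)\<bar>)"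
          unfolding E1_def by (rule order_trans[OF sum_abs]) (intro sum_mono sum_abs)
        also have "\<dots> \<le> (\<Sum>I\<in>F. \<Sum>k\<in>KS. (B + 1) * \<bar>a n I k - g I * q I k\<bar>)"
        proof (intro sum_mono)
          fix I k assume "I \<in> F" "k \<in> KS"
          then have "I \<in> II" "k \<in> KS" using F by auto
          then have "\<bar>r n I k - 1\<bar> \<le> B + 1" using r_le[of I k n] r_nn[of I k n] B by (smt (verit))
          then show "\<bar>(a n I k - g I * q I k) * (r n I k - 1)\<bar> \<le> (B + 1) * \<bar>a n I k - g I * q I k\<bar>"
            by (simp add: abs_mult mult.commute) (rule mult_right_mono, auto)
        qed
        also have "\<dots> = (B + 1) * (\<Sum>I\<in>F. \<Sum>k\<in>KS. \<bar>a n I k - g I * q I k\<bar>)"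
          by (simp add: sum_distrib_left)
        finally show ?thesis .
      qed
      have Bt: "B * \<tau> = \<eta>" using B by (simp add: \<tau>_def)
      have "B * (1 - (\<Sum>I\<in>F. \<Sum>k\<in>KS. a n I k)) \<le> B * (1 - (\<Sum>I\<in>F. g I)) + B * \<bar>(\<Sum>I\<in>F. \<Sum>k\<in>KS. a n I k) - (\<Sum>I\<in>F. g I)\<bar>"
      proof -
        have "B * ((\<Sum>I\<in>F. g I) - (\<Sum>I\<in>F. \<Sum>k\<in>KS. a n I k)) \<le> B * \<bar>(\<Sum>I\<in>F. \<Sum>k\<in>KS. a n I k) - (\<Sum>I\<in>F. g I)\<bar>"
          using B by (intro mult_left_mono) auto
        then show ?thesis by (simp add: algebra_simps)
      qed
      also have "B * (1 - (\<Sum>I\<in>F. g I)) \<le> B * \<tau>" using gF B by (intro mult_left_mono) auto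
      finally have Bb: "B * (1 - (\<Sum>I\<in>F. \<Sum>k\<in>KS. a n I k)) \<le> \<eta> + B * \<bar>(\<Sum>I\<in>F. \<Sum>k\<in>KS. a n I k) - (\<Sum>I\<in>F. g I)\<bar>"
        using Bt by simp
      have etaF: "\<eta> * (\<Sum>I\<in>F. g I) \<le> \<eta>" using gF1 \<eta> by (simp add: mult_left_le)
      have "0 \<le> E1 + (\<eta> * (\<Sum>I\<in>F. g I) - G0 * d n / 2) + (\<eta> + B * \<bar>(\<Sum>I\<in>F. \<Sum>k\<in>KS. a n I k) - (\<Sum>I\<in>F. g I)\<bar>)"
        using star[of n] split mainb Bb by linarith
      then have "G0 * d n / 2 \<le> 3 * \<eta>"
        using E1b elim etaF unfolding U_def by linarith
      then have "G0 * d n \<le> G0 * \<delta>" by (simp add: \<eta>_def)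
      then show "d n \<le> \<delta>" using G0 by simp
    qed
  qed
  have d0: "d \<longlonglongrightarrow> 0"
  proof (rule LIMSEQ_I)
    fix r :: real assume r: "0 < r"
    from main[of "r / 2"] r obtain no where "\<forall>n\<ge>no. d n \<le> r / 2" by (auto simp: eventually_sequentially)
    then have "\<forall>n\<ge>no. norm (d n - 0) < r" using d_nn r by (auto simp: abs_of_nonneg)
    then show "\<exists>no. \<forall>n\<ge>no. norm (d n - 0) < r" by blast
  qed
  have "(\<lambda>n. sqrt (Ph n I0 k0) - sqrt (q I0 k0)) \<longlonglongrightarrow> 0"
  proof (rule Lim_null_comparison)
    show "(\<lambda>n. sqrt (d n)) \<longlonglongrightarrow> 0" using tendsto_real_sqrt[OF d0] by simp
    show "\<forall>\<^sub>F n in sequentially. norm (sqrt (Ph n I0 k0) - sqrt (q I0 k0)) \<le> sqrt (d n)"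
    proof (intro always_eventually allI)
      fix n
      have "(sqrt (q I0 k0) - sqrt (Ph n I0 k0))\<^sup>2 \<le> d n"
        unfolding d_def using KS k0 by (intro member_le_sum) auto
      then have "sqrt ((sqrt (q I0 k0) - sqrt (Ph n I0 k0))\<^sup>2) \<le> sqrt (d n)" by (rule real_sqrt_le_mono)
      then show "norm (sqrt (Ph n I0 k0) - sqrt (q I0 k0)) \<le> sqrt (d n)" by simp
    qed
  qed
  then have "(\<lambda>n. (sqrt (Ph n I0 k0) - sqrt (q I0 k0)) + sqrt (q I0 k0)) \<longlonglongrightarrow> 0 + sqrt (q I0 k0)"
    by (intro tendsto_add tendsto_const)
  then have "(\<lambda>n. sqrt (Ph n I0 k0)) \<longlonglongrightarrow> sqrt (q I0 k0)" by simp
  then have "(\<lambda>n. (sqrt (Ph n I0 k0))\<^sup>2) \<longlonglongrightarrow> (sqrt (q I0 k0))\<^sup>2" by (intro tendsto_power)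
  then show ?thesis using Ph_nn[OF I0 k0] q_nn[OF I0 k0] by simp
qed



locale grp_setting =
  fixes P :: "'a measure" and K :: nat
    and X :: "nat \<Rightarrow> 'a \<Rightarrow> real" and Y :: "nat \<Rightarrow> 'a \<Rightarrow> nat" and C :: "nat \<Rightarrow> 'a \<Rightarrow> real"
    and G :: "real measure"
    and II :: "real set set" and m :: "real set \<Rightarrow> real"
  assumes P: "prob_space P"
    and K: "K \<ge> 1"
    and X_meas: "\<And>i. X i \<in> borel_measurable P"
    and Y_meas: "\<And>i. Y i \<in> measurable P (count_space UNIV)"
    and C_meas: "\<And>i. C i \<in> borel_measurable P"
    and Y_range: "\<And>i \<omega>. \<omega> \<in> space P \<Longrightarrow> Y i \<omega> \<in> {1..K}"
    and indep: "prob_space.indep_vars P (\<lambda>_. borel \<Otimes>\<^sub>M count_space UNIV \<Otimes>\<^sub>M borel)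
                  (\<lambda>i \<omega>. (X i \<omega>, Y i \<omega>, C i \<omega>)) UNIV"
    and ident: "\<And>i. distr P (borel \<Otimes>\<^sub>M count_space UNIV \<Otimes>\<^sub>M borel) (\<lambda>\<omega>. (X i \<omega>, Y i \<omega>, C i \<omega>))
                   = distr P (borel \<Otimes>\<^sub>M count_space UNIV \<Otimes>\<^sub>M borel) (\<lambda>\<omega>. (X 0 \<omega>, Y 0 \<omega>, C 0 \<omega>))"
    and C_indep: "\<And>i. prob_space.indep_set P
           {(\<lambda>\<omega>. (X i \<omega>, Y i \<omega>)) -` A \<inter> space P | A. A \<in> sets (borel \<Otimes>\<^sub>M count_space UNIV)}
           {C i -` B \<inter> space P | B. B \<in> sets borel}"
    and G: "G = distr P borel (C 0)"
    and II_countable: "countable II"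
    and II_interval: "\<And>I. I \<in> II \<Longrightarrow> is_interval I"
    and II_disjoint: "disjoint II"
    and II_pos: "\<And>I. I \<in> II \<Longrightarrow> measure G I > 0"
    and II_full: "measure G (\<Union>II) = 1"
    and m_in: "\<And>I. I \<in> II \<Longrightarrow> m I \<in> I"
    and m_inj: "inj_on m II"
begin

abbreviation "T \<equiv> borel \<Otimes>\<^sub>M count_space UNIV \<Otimes>\<^sub>M (borel :: real measure)"
definition "tri i \<omega> = (X i \<omega>, Y i \<omega>, C i \<omega>)"

lemma tri_meas[measurable]: "tri i \<in> measurable P T"
  unfolding tri_def using X_meas Y_meas C_meas by measurable

lemma prob: "prob_space P" by (rule P)

lemma tri_eta: "tri i = (\<lambda>\<omega>. (X i \<omega>, Y i \<omega>, C i \<omega>))" by (rule ext) (simp add: tri_def)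

lemma ident': "distr P T (tri i) = distr P T (tri 0)" unfolding tri_eta by (rule ident)

lemma G_prob: "prob_space G"
  unfolding G using C_meas by (intro prob_space.prob_space_distr[OF P]) auto

lemma sets_G[simp]: "sets G = sets borel" by (simp add: G)
lemma space_G[simp]: "space G = UNIV" by (simp add: G)

lemma II_sets: "I \<in> II \<Longrightarrow> I \<in> sets borel"
  using II_pos[of I] measure_notin_sets[of I G] by force

lemma UII_sets: "\<Union>II \<in> sets borel"
  using II_full measure_notin_sets[of "\<Union>II" G] by force

lemma distr_C: "distr P borel (C i) = G"
proof -
  have "distr P borel (C i) = distr (distr P T (tri i)) borel (\<lambda>z. snd (snd z))"
    by (subst distr_distr) (auto simp: tri_def comp_def)
  also have "\<dots> = distr (distr P T (tri 0)) borel (\<lambda>z. snd (snd z))"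
    using ident'[of i] by simp
  also have "\<dots> = G"
    by (subst distr_distr) (auto simp: tri_def comp_def G)
  finally show ?thesis .
qed

lemma AE_C_in: "AE \<omega> in P. \<forall>i. C i \<omega> \<in> \<Union>II"
proof -
  interpret prob_space P by (rule P)
  have "AE \<omega> in P. C i \<omega> \<in> \<Union>II" for i
  proof -
    have "prob {\<omega>\<in>space P. C i \<omega> \<in> \<Union>II} = measure (distr P borel (C i)) (\<Union>II)"
      using UII_sets C_meas by (subst measure_distr) (auto simp: vimage_def Int_def conj_commute)
    also have "\<dots> = 1" using distr_C II_full by simp
    finally show ?thesis by (auto dest!: AE_prob_1)
  qed
  then show ?thesis by (simp add: AE_all_countable)
qed

lemma D_eq_iff:
  assumes c: "c \<in> \<Union>II" and I: "I \<in> II"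
  shows "grp_D II m c = m I \<longleftrightarrow> c \<in> I"
proof -
  obtain J where J: "J \<in> II" "c \<in> J" using c by blast
  have uniq: "J' = J" if "J' \<in> II" "c \<in> J'" for J'
  proof (rule ccontr)
    assume "J' \<noteq> J"
    then have "J' \<inter> J = {}" using II_disjoint that(1) J(1) unfolding disjoint_def by blast
    then show False using that(2) J(2) by blast
  qed
  have the: "(THE I. I \<in> II \<and> c \<in> I) = J"
    by (rule the_equality) (use J uniq in blast)+
  have ex: "\<exists>I\<in>II. c \<in> I" using J by blast
  have D: "grp_D II m c = m J" unfolding grp_D_def using ex the by simp
  show ?thesis
  proof
    assume "grp_D II m c = m I"
    then have "m J = m I" using D by simp
    then have "J = I" using inj_onD[OF m_inj _ J(1) I] by blast
    then show "c \<in> I" using J by simp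
  next
    assume "c \<in> I"
    then have "I = J" using uniq I by blast
    then show "grp_D II m c = m I" using D by simp
  qed
qed

lemma slln_tri:
  fixes f :: "real \<times> nat \<times> real \<Rightarrow> real"
  assumes f[measurable]: "f \<in> borel_measurable T" and f01: "\<And>z. f z \<in> {0..1}"
  shows "AE \<omega> in P. (\<lambda>n. (1 / real n) * (\<Sum>i<n. f (tri i \<omega>))) \<longlonglongrightarrow> prob_space.expectation P (\<lambda>\<omega>. f (tri 0 \<omega>))"
proof (rule slln_01[OF P])
  show "prob_space.indep_vars P (\<lambda>_. borel) (\<lambda>i \<omega>. f (tri i \<omega>)) UNIV"
    unfolding tri_eta by (rule prob_space.indep_vars_compose2[OF P indep]) simp
  show "f (tri i \<omega>) \<in> {0..1}" for i \<omega> by (rule f01)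
  show "prob_space.expectation P (\<lambda>\<omega>. f (tri i \<omega>)) = prob_space.expectation P (\<lambda>\<omega>. f (tri 0 \<omega>))" for i
  proof -
    have "prob_space.expectation P (\<lambda>\<omega>. f (tri i \<omega>)) = integral\<^sup>L (distr P T (tri i)) f"
      by (rule integral_distr[OF tri_meas f, symmetric])
    also have "\<dots> = integral\<^sup>L (distr P T (tri 0)) f" using ident'[of i] by simp
    also have "\<dots> = prob_space.expectation P (\<lambda>\<omega>. f (tri 0 \<omega>))"
      by (rule integral_distr[OF tri_meas f])
    finally show ?thesis .
  qed
qed


lemma F0_mono: "c \<le> c' \<Longrightarrow> grp_F0 P (X 0) (Y 0) k c \<le> grp_F0 P (X 0) (Y 0) k c'"
proof -
  assume cc: "c \<le> c'"
  interpret prob_space P by (rule P)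
  have [measurable]: "Y 0 \<in> measurable P (count_space UNIV)" by (rule Y_meas)
  have [measurable]: "X 0 \<in> borel_measurable P" by (rule X_meas)
  have "{\<omega>\<in>space P. X 0 \<omega> \<le> c' \<and> Y 0 \<omega> = k} \<in> sets P" by measurable
  then show ?thesis unfolding grp_F0_def
    by (rule finite_measure_mono[rotated]) (use cc in auto)
qed

lemma F0_meas[measurable]: "grp_F0 P (X 0) (Y 0) k \<in> borel_measurable borel"
  by (rule borel_measurable_mono) (auto simp: mono_def intro: F0_mono)

lemma F0_01: "0 \<le> grp_F0 P (X 0) (Y 0) k c" "grp_F0 P (X 0) (Y 0) k c \<le> 1"
  unfolding grp_F0_def using prob_space.prob_le_1[OF P] by auto

lemma E_ind: "I \<in> II \<Longrightarrow> prob_space.expectation P (\<lambda>\<omega>. indicator I (C 0 \<omega>)) = measure G I"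
proof -
  assume I: "I \<in> II"
  have "prob_space.expectation P (\<lambda>\<omega>. indicator I (C 0 \<omega>) :: real) = integral\<^sup>L (distr P borel (C 0)) (indicator I)"
    by (rule integral_distr[OF C_meas[of 0] borel_measurable_indicator[OF II_sets[OF I]], symmetric])
  then show ?thesis by (simp add: G[symmetric])
qed

lemma E_Delta:
  assumes k: "k \<in> {1..K}" and I: "I \<in> II"
  shows "prob_space.expectation P (\<lambda>\<omega>. grp_Delta K k (X 0 \<omega>) (Y 0 \<omega>) (C 0 \<omega>) * indicator I (C 0 \<omega>))
         = (LINT c:I|G. grp_F0 P (X 0) (Y 0) k c)"
proof -
  interpret prob_space P by (rule P)
  define S where "S = (borel \<Otimes>\<^sub>M count_space UNIV :: (real \<times> nat) measure)"
  define XY where "XY = (\<lambda>\<omega>. (X 0 \<omega>, Y 0 \<omega>))"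
  have [measurable]: "Y 0 \<in> measurable P (count_space UNIV)" by (rule Y_meas)
  have [measurable]: "X 0 \<in> borel_measurable P" by (rule X_meas)
  have [measurable]: "C 0 \<in> borel_measurable P" by (rule C_meas)
  have XYm[measurable]: "XY \<in> measurable P S" unfolding XY_def S_def by measurable
  have Isets[measurable]: "I \<in> sets borel" by (rule II_sets[OF I])
  define \<mu> where "\<mu> = distr P S XY"
  interpret mu: prob_space \<mu> unfolding \<mu>_def by (rule prob_space_distr) (rule XYm)
  interpret G: prob_space G by (rule G_prob)
  interpret PS: pair_prob_space \<mu> G ..
  have prodeq: "\<mu> \<Otimes>\<^sub>M G = distr P (S \<Otimes>\<^sub>M borel) (\<lambda>\<omega>. (XY \<omega>, C 0 \<omega>))"
  proof (rule pair_measure_eqI)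
    show "sigma_finite_measure \<mu>" "sigma_finite_measure G" by unfold_locales
    show "sets (\<mu> \<Otimes>\<^sub>M G) = sets (distr P (S \<Otimes>\<^sub>M borel) (\<lambda>\<omega>. (XY \<omega>, C 0 \<omega>)))"
      by (simp add: \<mu>_def cong: sets_pair_measure_cong)
    fix A B assume A: "A \<in> sets \<mu>" and B: "B \<in> sets G"
    then have Am: "A \<in> sets S" and Bm: "B \<in> sets borel" by (auto simp: \<mu>_def)
    have a: "XY -` A \<inter> space P \<in> {(\<lambda>\<omega>. (X 0 \<omega>, Y 0 \<omega>)) -` A \<inter> space P | A. A \<in> sets (borel \<Otimes>\<^sub>M count_space UNIV)}"
      using Am by (auto simp: XY_def S_def)
    have b: "C 0 -` B \<inter> space P \<in> {C 0 -` B \<inter> space P | B. B \<in> sets borel}" using Bm by auto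
    have ind: "prob ((XY -` A \<inter> space P) \<inter> (C 0 -` B \<inter> space P)) = prob (XY -` A \<inter> space P) * prob (C 0 -` B \<inter> space P)"
      by (rule indep_setD[OF C_indep[of 0] a b])
    have "emeasure \<mu> A * emeasure G B = emeasure P (XY -` A \<inter> space P) * emeasure P (C 0 -` B \<inter> space P)"
      using Am Bm by (simp add: \<mu>_def G emeasure_distr)
    also have "\<dots> = ennreal (prob (XY -` A \<inter> space P) * prob (C 0 -` B \<inter> space P))"
      by (simp add: emeasure_eq_measure ennreal_mult)
    also have "\<dots> = emeasure P ((XY -` A \<inter> space P) \<inter> (C 0 -` B \<inter> space P))"
      by (simp add: emeasure_eq_measure ind)
    also have "(XY -` A \<inter> space P) \<inter> (C 0 -` B \<inter> space P) = (\<lambda>\<omega>. (XY \<omega>, C 0 \<omega>)) -` (A \<times> B) \<inter> space P"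
      by auto
    also have "emeasure P \<dots> = emeasure (distr P (S \<Otimes>\<^sub>M borel) (\<lambda>\<omega>. (XY \<omega>, C 0 \<omega>))) (A \<times> B)"
      using Am Bm by (subst emeasure_distr) auto
    finally show "emeasure \<mu> A * emeasure G B = emeasure (distr P (S \<Otimes>\<^sub>M borel) (\<lambda>\<omega>. (XY \<omega>, C 0 \<omega>))) (A \<times> B)" .
  qed
  define h where "h = (\<lambda>xy (c::real). (if fst xy \<le> c \<and> snd xy = k then 1 else 0) * indicator I c :: real)"
  have hm[measurable]: "(\<lambda>(xy, c). h xy c) \<in> borel_measurable (S \<Otimes>\<^sub>M borel)"
    unfolding h_def S_def by measurable
  have kK: "k \<noteq> K + 1" using k by auto
  have "prob_space.expectation P (\<lambda>\<omega>. grp_Delta K k (X 0 \<omega>) (Y 0 \<omega>) (C 0 \<omega>) * indicator I (C 0 \<omega>))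
        = expectation (\<lambda>\<omega>. (\<lambda>(xy, c). h xy c) (XY \<omega>, C 0 \<omega>))"
    by (rule Bochner_Integration.integral_cong) (simp_all add: grp_Delta_def h_def XY_def kK[simplified])
  also have "\<dots> = integral\<^sup>L (distr P (S \<Otimes>\<^sub>M borel) (\<lambda>\<omega>. (XY \<omega>, C 0 \<omega>))) (\<lambda>(xy, c). h xy c)"
    by (rule integral_distr[symmetric]) measurable
  also have "\<dots> = integral\<^sup>L (\<mu> \<Otimes>\<^sub>M G) (\<lambda>(xy, c). h xy c)" by (simp add: prodeq)
  also have "\<dots> = (\<integral>c. (\<integral>xy. h xy c \<partial>\<mu>) \<partial>G)"
  proof (rule PS.integral_snd[symmetric])
    show "integrable (\<mu> \<Otimes>\<^sub>M G) (\<lambda>(xy, c). h xy c)"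
    proof (rule PS.P.integrable_const_bound[where B=1])
      show "AE x in \<mu> \<Otimes>\<^sub>M G. norm (case x of (xy, c) \<Rightarrow> h xy c) \<le> 1"
        by (auto simp: h_def indicator_def split: prod.split)
      show "(\<lambda>(xy, c). h xy c) \<in> borel_measurable (\<mu> \<Otimes>\<^sub>M G)"
        using hm by (simp add: \<mu>_def G)
    qed
  qed
  also have "\<dots> = (\<integral>c. indicator I c * grp_F0 P (X 0) (Y 0) k c \<partial>G)"
  proof (intro Bochner_Integration.integral_cong refl)
    fix c
    define A where "A = {xy :: real \<times> nat. fst xy \<le> c \<and> snd xy = k}"
    have "A = {..c} \<times> {k}" by (auto simp: A_def)
    then have Am[measurable]: "A \<in> sets S" unfolding S_def by (auto intro!: pair_measureI)
    have "(\<integral>xy. h xy c \<partial>\<mu>) = (\<integral>xy. indicator I c * indicator A xy \<partial>\<mu>)"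
      by (intro Bochner_Integration.integral_cong refl) (auto simp: h_def A_def indicator_def)
    also have "\<dots> = indicator I c * measure \<mu> A"
      using Am by (simp add: \<mu>_def)
    also have "measure \<mu> A = measure P (XY -` A \<inter> space P)"
      unfolding \<mu>_def by (rule measure_distr[OF XYm Am])
    also have "XY -` A \<inter> space P = {\<omega>\<in>space P. X 0 \<omega> \<le> c \<and> Y 0 \<omega> = k}"
      by (auto simp: XY_def A_def)
    finally show "(\<integral>xy. h xy c \<partial>\<mu>) = indicator I c * grp_F0 P (X 0) (Y 0) k c"
      by (simp add: grp_F0_def)
  qed
  also have "\<dots> = (LINT c:I|G. grp_F0 P (X 0) (Y 0) k c)"
    by (simp add: set_lebesgue_integral_def)
  finally show ?thesis .
qed


lemma bnd_set_integrable:
  fixes f :: "real \<Rightarrow> real"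
  assumes I: "I \<in> sets borel" and f: "f \<in> borel_measurable borel" and b: "\<And>x. \<bar>f x\<bar> \<le> 1"
  shows "set_integrable G I f"
proof -
  interpret G: prob_space G by (rule G_prob)
  show ?thesis unfolding set_integrable_def
  proof (rule G.integrable_const_bound[where B=1])
    show "AE x in G. norm (indicator I x *\<^sub>R f x) \<le> 1"
      using b by (auto simp: indicator_def)
    have "(\<lambda>x. indicator I x *\<^sub>R f x) \<in> borel_measurable borel"
      using I f by (intro borel_measurable_scaleR borel_measurable_indicator)
    then show "(\<lambda>x. indicator I x *\<^sub>R f x) \<in> borel_measurable G"
      by (simp add: measurable_cong_sets[OF sets_G refl])
  qed
qed

lemma F0_set_integrable: "I \<in> sets borel \<Longrightarrow> set_integrable G I (grp_F0 P (X 0) (Y 0) k)"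
  by (rule bnd_set_integrable) (use F0_01 in auto)

lemma sep:
  assumes I: "I \<in> II" and J: "J \<in> II" and lt: "m I < m J" and c: "c \<in> I" and c': "c' \<in> J"
  shows "c \<le> c'"
proof (rule ccontr)
  assume "\<not> c \<le> c'"
  then have cc: "c' < c" by simp
  have ne: "I \<noteq> J" using lt by auto
  have disj: "I \<inter> J = {}" using II_disjoint I J ne unfolding disjoint_def by blast
  show False
  proof (cases "c' < m I")
    case True
    have "m I \<in> J" using II_interval[OF J] c' m_in[OF J] True lt
      unfolding is_interval_1 by (meson less_imp_le)
    then show False using m_in[OF I] disj by blast
  next
    case False
    have "c' \<in> I" using II_interval[OF I] m_in[OF I] c False cc
      unfolding is_interval_1 by (meson less_imp_le not_less)
    then show False using c' disj by blast
  qed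
qed

lemma H0_mono:
  assumes I: "I \<in> II" and J: "J \<in> II" and le: "m I \<le> m J"
  shows "grp_H0 P (X 0) (Y 0) G k I \<le> grp_H0 P (X 0) (Y 0) G k J"
proof (cases "I = J")
  case False
  interpret G: prob_space G by (rule G_prob)
  have lt: "m I < m J" using le False inj_onD[OF m_inj _ I J] by force
  define F where "F = grp_F0 P (X 0) (Y 0) k"
  define z where "z = Sup I"
  have Ine: "I \<noteq> {}" using m_in[OF I] by auto
  have bdd: "bdd_above I" using sep[OF I J lt _ m_in[OF J]] by (auto simp: bdd_above_def)
  have cz: "c \<le> z" if "c \<in> I" for c using cSup_upper[OF that bdd] by (simp add: z_def)
  have zc: "z \<le> c'" if "c' \<in> J" for c'
    unfolding z_def using sep[OF I J lt _ that] Ine by (intro cSup_least) auto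
  have Is[measurable]: "I \<in> sets borel" and Js[measurable]: "J \<in> sets borel" using II_sets I J by auto
  have GI: "measure G I > 0" and GJ: "measure G J > 0" using II_pos I J by auto
  have "(LINT c:I|G. F c) \<le> (LINT c:I|G. F z)"
    by (rule set_integral_mono) (use F0_set_integrable[OF Is] bnd_set_integrable[OF Is, of "\<lambda>_. F z"] F0_01 cz F0_mono in \<open>auto simp: F_def\<close>)
  also have "\<dots> = measure G I * F z" by (subst set_integral_const) auto
  finally have a: "(LINT c:I|G. F c) / measure G I \<le> F z" using GI by (simp add: divide_le_eq mult.commute)
  have "measure G J * F z = (LINT c:J|G. F z)" by (subst set_integral_const) auto
  also have "\<dots> \<le> (LINT c:J|G. F c)"
    by (rule set_integral_mono) (use F0_set_integrable[OF Js] bnd_set_integrable[OF Js, of "\<lambda>_. F z"] F0_01 zc F0_mono in \<open>auto simp: F_def\<close>)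
  finally have b: "F z \<le> (LINT c:J|G. F c) / measure G J" using GJ by (simp add: le_divide_eq mult.commute)
  show ?thesis using a b by (simp add: grp_H0_def F_def)
qed simp

lemma g_full:
  assumes \<tau>: "0 < \<tau>"
  shows "\<exists>F. finite F \<and> F \<subseteq> II \<and> 1 - \<tau> \<le> (\<Sum>I\<in>F. measure G I)"
proof -
  interpret G: prob_space G by (rule G_prob)
  have ne: "II \<noteq> {}" using II_full by auto
  define f where "f = from_nat_into II"
  have rf: "range f = II" unfolding f_def by (rule range_from_nat_into[OF ne II_countable])
  define A where "A n = \<Union>(f ` {..<n})" for n
  have Am: "range A \<subseteq> sets G" unfolding A_def using rf II_sets by (auto intro!: sets.finite_UN)
  have inc: "incseq A"
  proof (rule incseq_SucI)
    fix n show "A n \<subseteq> A (Suc n)" unfolding A_def by (auto simp: lessThan_Suc)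
  qed
  have UA: "(\<Union>n. A n) = \<Union>II"
    unfolding A_def using rf by auto
  have "(\<lambda>n. measure G (A n)) \<longlonglongrightarrow> measure G (\<Union>n. A n)"
    by (rule Lim_measure_incseq[OF Am inc]) simp
  then have "(\<lambda>n. measure G (A n)) \<longlonglongrightarrow> 1" using UA II_full by simp
  then have "eventually (\<lambda>n. 1 - \<tau> < measure G (A n)) sequentially"
    using \<tau> by (simp add: order_tendsto_iff)
  then obtain n where n: "1 - \<tau> < measure G (A n)" by (auto simp: eventually_sequentially)
  define F where "F = f ` {..<n}"
  have F: "finite F" "F \<subseteq> II" using rf by (auto simp: F_def)
  have "measure G (A n) = measure G (\<Union>F)" by (simp add: A_def F_def)
  also have "\<dots> = (\<Sum>I\<in>F. measure G I)"
  proof (rule measure_Union')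
    show "finite F" by fact
    show "S \<in> fmeasurable G" if "S \<in> F" for S
      using that F II_sets by (auto simp: G.fmeasurable_eq_sets)
    show "pairwise disjnt F"
      using II_disjoint F unfolding pairwise_def disjoint_def disjnt_def by blast
  qed
  finally show ?thesis using F n by (intro exI[of _ F]) auto
qed

end


lemma Delta_sum: "y \<in> {1..K} \<Longrightarrow> (\<Sum>k=1..K+1. grp_Delta K k x y c) = 1"
proof -
  assume y: "y \<in> {1..K}"
  have "(\<Sum>k=1..K+1. grp_Delta K k x y c) = (\<Sum>k=1..K. grp_Delta K k x y c) + grp_Delta K (K+1) x y c"
    by simp
  also have "(\<Sum>k=1..K. grp_Delta K k x y c) = (\<Sum>k=1..K. if k = y then (if x \<le> c then 1 else 0) else 0)"
    by (intro sum.cong refl) (auto simp: grp_Delta_def)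
  also have "\<dots> = (if x \<le> c then 1 else 0)" using y by (simp add: sum.delta)
  finally show ?thesis by (simp add: grp_Delta_def)
qed

lemma Delta_nn: "0 \<le> grp_Delta K k x y c" by (simp add: grp_Delta_def)

lemma M_nn: "0 \<le> grp_M K II m X Y C k n \<omega> I"
  unfolding grp_M_def by (intro mult_nonneg_nonneg sum_nonneg) (auto simp: Delta_nn)

lemma Hext_sum: "(\<Sum>k=1..K+1. grp_Hext K H k I) = 1"
proof -
  have "(\<Sum>k=1..K+1. grp_Hext K H k I) = (\<Sum>k=1..K. grp_Hext K H k I) + grp_Hext K H (K+1) I" by simp
  also have "(\<Sum>k=1..K. grp_Hext K H k I) = (\<Sum>k=1..K. H k I)"
    by (intro sum.cong refl) (auto simp: grp_Hext_def)
  finally show ?thesis by (simp add: grp_Hext_def)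
qed

lemma Hext_lin:
  assumes "k \<in> {1..K+1}"
  shows "grp_Hext K (\<lambda>k I. (1 - \<epsilon>) * H k I + \<epsilon> / real (K + 1)) k I
       = (1 - \<epsilon>) * grp_Hext K H k I + \<epsilon> / real (card {1..K+1})"
proof (cases "k = K + 1")
  case True
  have "(\<Sum>j=1..K. (1 - \<epsilon>) * H j I + \<epsilon> / real (K + 1)) = (1 - \<epsilon>) * (\<Sum>j=1..K. H j I) + real K * (\<epsilon> / real (K + 1))"
    by (simp add: sum.distrib sum_distrib_left)
  moreover have "real K * (\<epsilon> / real (K + 1)) = \<epsilon> - \<epsilon> / real (K + 1)"
    by (simp add: field_simps)
  ultimately show ?thesis using True by (simp add: grp_Hext_def algebra_simps)
qed (simp add: grp_Hext_def)

lemma Mtot_split: "grp_Mtot K II m X Y C n \<omega> I = (\<Sum>k=1..K. grp_M K II m X Y C k n \<omega> I) + grp_M K II m X Y C (K+1) n \<omega> I"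
  by (simp add: grp_Mtot_def)

context grp_setting
begin

lemma Mtot_eq:
  assumes \<omega>: "\<omega> \<in> space P"
  shows "grp_Mtot K II m X Y C n \<omega> I = (1 / real n) * (\<Sum>i<n. if grp_D II m (C i \<omega>) = m I then 1 else 0)"
proof -
  have "grp_Mtot K II m X Y C n \<omega> I = (1 / real n) * (\<Sum>k=1..K+1. \<Sum>i<n. grp_Delta K k (X i \<omega>) (Y i \<omega>) (C i \<omega>) *
                             (if grp_D II m (C i \<omega>) = m I then 1 else 0))"
    unfolding grp_Mtot_def grp_M_def by (rule sum_distrib_left[symmetric])
  also have "(\<Sum>k=1..K+1. \<Sum>i<n. grp_Delta K k (X i \<omega>) (Y i \<omega>) (C i \<omega>) * (if grp_D II m (C i \<omega>) = m I then 1 else 0))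
     = (\<Sum>i<n. (\<Sum>k=1..K+1. grp_Delta K k (X i \<omega>) (Y i \<omega>) (C i \<omega>)) * (if grp_D II m (C i \<omega>) = m I then 1 else 0))"
    by (subst sum.swap) (simp only: sum_distrib_right)
  also have "\<dots> = (\<Sum>i<n. if grp_D II m (C i \<omega>) = m I then 1 else 0)"
    using Delta_sum[OF Y_range[OF \<omega>]] by simp
  finally show ?thesis .
qed

lemma a_sum:
  assumes \<omega>: "\<omega> \<in> space P" and F: "finite F" "F \<subseteq> II"
  shows "(\<Sum>I\<in>F. grp_Mtot K II m X Y C n \<omega> I) \<le> 1"
proof -
  have "(\<Sum>I\<in>F. grp_Mtot K II m X Y C n \<omega> I) = (1 / real n) * (\<Sum>i<n. \<Sum>I\<in>F. if grp_D II m (C i \<omega>) = m I then 1 else 0)"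
  proof -
    have "(\<Sum>I\<in>F. grp_Mtot K II m X Y C n \<omega> I) = (\<Sum>I\<in>F. (1 / real n) * (\<Sum>i<n. if grp_D II m (C i \<omega>) = m I then 1 else 0))"
      by (simp only: Mtot_eq[OF \<omega>])
    also have "\<dots> = (1 / real n) * (\<Sum>I\<in>F. \<Sum>i<n. if grp_D II m (C i \<omega>) = m I then 1 else 0)"
      by (simp only: sum_distrib_left)
    also have "(\<Sum>I\<in>F. \<Sum>i<n. if grp_D II m (C i \<omega>) = m I then 1 else (0::real)) = (\<Sum>i<n. \<Sum>I\<in>F. if grp_D II m (C i \<omega>) = m I then 1 else 0)"
      by (rule sum.swap)
    finally show ?thesis .
  qed
  also have "\<dots> \<le> (1 / real n) * (\<Sum>i<n. 1)"
  proof (intro mult_left_mono sum_mono)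
    fix i
    have "(\<Sum>I\<in>F. if grp_D II m (C i \<omega>) = m I then 1 else 0 :: real) = real (card {I\<in>F. grp_D II m (C i \<omega>) = m I})"
      using F by (simp add: sum.If_cases Int_def)
    also have "card {I\<in>F. grp_D II m (C i \<omega>) = m I} \<le> 1"
    proof -
      have "finite {I\<in>F. grp_D II m (C i \<omega>) = m I}" using F by simp
      moreover have "\<forall>x\<in>{I\<in>F. grp_D II m (C i \<omega>) = m I}. \<forall>y\<in>{I\<in>F. grp_D II m (C i \<omega>) = m I}. x = y"
        using F inj_onD[OF m_inj] by auto
      ultimately have "card {I\<in>F. grp_D II m (C i \<omega>) = m I} \<le> Suc 0" by (subst card_le_Suc0_iff_eq)
      then show ?thesis by simp
    qed
    finally show "(\<Sum>I\<in>F. if grp_D II m (C i \<omega>) = m I then 1 else 0 :: real) \<le> 1" by simp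
  qed simp
  also have "\<dots> \<le> 1" by (cases "n = 0") auto
  finally show ?thesis .
qed

lemma S_fin: "finite {I\<in>II. grp_Mtot K II m X Y C n \<omega> I \<noteq> 0}"
proof -
  have "{I\<in>II. grp_Mtot K II m X Y C n \<omega> I \<noteq> 0} \<subseteq> m -` ((\<lambda>i. grp_D II m (C i \<omega>)) ` {..<n}) \<inter> II"
  proof
    fix I assume "I \<in> {I\<in>II. grp_Mtot K II m X Y C n \<omega> I \<noteq> 0}"
    then have I: "I \<in> II" and nz: "grp_Mtot K II m X Y C n \<omega> I \<noteq> 0" by auto
    have "\<exists>i<n. grp_D II m (C i \<omega>) = m I"
    proof (rule ccontr)
      assume "\<not> (\<exists>i<n. grp_D II m (C i \<omega>) = m I)"
      then have "\<forall>i\<in>{..<n}. grp_D II m (C i \<omega>) \<noteq> m I" by auto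
      then have "grp_Mtot K II m X Y C n \<omega> I = 0" unfolding grp_Mtot_def grp_M_def by simp
      then show False using nz by simp
    qed
    then obtain i where "i < n" "grp_D II m (C i \<omega>) = m I" by blast
    then show "I \<in> m -` ((\<lambda>i. grp_D II m (C i \<omega>)) ` {..<n}) \<inter> II" using I by force
  qed
  moreover have "finite (m -` ((\<lambda>i. grp_D II m (C i \<omega>)) ` {..<n}) \<inter> II)"
    by (intro finite_vimage_IntI m_inj) simp
  ultimately show ?thesis by (rule finite_subset)
qed


definition "fD k I z = grp_Delta K k (fst z) (fst (snd z)) (snd (snd z)) * indicator I (snd (snd z))"

lemma fD_meas: "I \<in> II \<Longrightarrow> fD k I \<in> borel_measurable T"
proof -
  assume I: "I \<in> II"
  have [measurable]: "I \<in> sets borel" by (rule II_sets[OF I])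
  show ?thesis
  proof (cases "k = K + 1")
    case True
    then have "fD k I = (\<lambda>z. (if fst z > snd (snd z) then 1 else 0) * indicator I (snd (snd z)))"
      by (auto simp: fD_def grp_Delta_def fun_eq_iff)
    then show ?thesis by simp
  next
    case False
    then have "fD k I = (\<lambda>z. (if fst z \<le> snd (snd z) \<and> fst (snd z) = k then 1 else 0) * indicator I (snd (snd z)))"
      by (auto simp: fD_def grp_Delta_def fun_eq_iff)
    then show ?thesis by simp
  qed
qed

lemma fD_01: "fD k I z \<in> {0..1}"
  by (auto simp: fD_def grp_Delta_def indicator_def)

lemma M_eq_avg:
  assumes \<omega>: "\<forall>i. C i \<omega> \<in> \<Union>II" and I: "I \<in> II"
  shows "grp_M K II m X Y C k n \<omega> I = (1 / real n) * (\<Sum>i<n. fD k I (tri i \<omega>))"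
  unfolding grp_M_def
  by (intro arg_cong2[where f="(*)"] sum.cong refl) (auto simp: fD_def tri_def D_eq_iff[OF \<omega>[rule_format] I] indicator_def)

lemma Mtot_eq_avg:
  assumes \<omega>s: "\<omega> \<in> space P" and \<omega>: "\<forall>i. C i \<omega> \<in> \<Union>II" and I: "I \<in> II"
  shows "grp_Mtot K II m X Y C n \<omega> I = (1 / real n) * (\<Sum>i<n. indicator I (C i \<omega>))"
  unfolding Mtot_eq[OF \<omega>s]
  by (intro arg_cong2[where f="(*)"] sum.cong refl) (auto simp: D_eq_iff[OF \<omega>[rule_format] I] indicator_def)

lemma AE_good:
  "AE \<omega> in P. (\<forall>i. C i \<omega> \<in> \<Union>II) \<and>
     (\<forall>I\<in>II. \<forall>k\<in>{1..K}. (\<lambda>n. (1 / real n) * (\<Sum>i<n. fD k I (tri i \<omega>))) \<longlonglongrightarrow> measure G I * grp_H0 P (X 0) (Y 0) G k I) \<and>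
     (\<forall>I\<in>II. (\<lambda>n. (1 / real n) * (\<Sum>i<n. indicator I (C i \<omega>))) \<longlonglongrightarrow> measure G I)"
proof -
  have A2: "AE \<omega> in P. \<forall>I\<in>II. \<forall>k\<in>{1..K}. (\<lambda>n. (1 / real n) * (\<Sum>i<n. fD k I (tri i \<omega>))) \<longlonglongrightarrow> measure G I * grp_H0 P (X 0) (Y 0) G k I"
  proof (rule AE_ball_countable'[OF _ II_countable])
    fix I assume I: "I \<in> II"
    show "AE \<omega> in P. \<forall>k\<in>{1..K}. (\<lambda>n. (1 / real n) * (\<Sum>i<n. fD k I (tri i \<omega>))) \<longlonglongrightarrow> measure G I * grp_H0 P (X 0) (Y 0) G k I"
    proof (rule AE_ball_countable')
      fix k assume k: "k \<in> {1..K}"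
      have "prob_space.expectation P (\<lambda>\<omega>. fD k I (tri 0 \<omega>))
          = prob_space.expectation P (\<lambda>\<omega>. grp_Delta K k (X 0 \<omega>) (Y 0 \<omega>) (C 0 \<omega>) * indicator I (C 0 \<omega>))"
        by (simp add: fD_def tri_def)
      also have "\<dots> = (LINT c:I|G. grp_F0 P (X 0) (Y 0) k c)" by (rule E_Delta[OF k I])
      also have "\<dots> = measure G I * grp_H0 P (X 0) (Y 0) G k I"
        using II_pos[OF I] by (simp add: grp_H0_def)
      finally have ex: "prob_space.expectation P (\<lambda>\<omega>. fD k I (tri 0 \<omega>)) = measure G I * grp_H0 P (X 0) (Y 0) G k I" .
      show "AE \<omega> in P. (\<lambda>n. (1 / real n) * (\<Sum>i<n. fD k I (tri i \<omega>))) \<longlonglongrightarrow> measure G I * grp_H0 P (X 0) (Y 0) G k I"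
        using slln_tri[OF fD_meas[where k=k, OF I] fD_01] by (simp only: ex)
    next
      show "countable {1..K}" by (rule countable_finite) simp
    qed
  qed
  have A3: "AE \<omega> in P. \<forall>I\<in>II. (\<lambda>n. (1 / real n) * (\<Sum>i<n. indicator I (C i \<omega>))) \<longlonglongrightarrow> measure G I"
  proof (rule AE_ball_countable'[OF _ II_countable])
    fix I assume I: "I \<in> II"
    have [measurable]: "I \<in> sets borel" by (rule II_sets[OF I])
    have fm: "(\<lambda>z::real \<times> nat \<times> real. indicator I (snd (snd z)) :: real) \<in> borel_measurable T" by measurable
    have f01: "(indicator I (snd (snd z)) :: real) \<in> {0..1}" for z :: "real \<times> nat \<times> real"
      by (auto simp: indicator_def)
    show "AE \<omega> in P. (\<lambda>n. (1 / real n) * (\<Sum>i<n. indicator I (C i \<omega>))) \<longlonglongrightarrow> measure G I"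
      using slln_tri[OF fm f01] E_ind[OF I] by (simp add: tri_def)
  qed
  show ?thesis using AE_C_in A2 A3 by eventually_elim auto
qed



lemma consist_omega:
  fixes Hhat Htil :: "nat \<Rightarrow> 'a \<Rightarrow> nat \<Rightarrow> real set \<Rightarrow> real"
  assumes \<omega>s: "\<omega> \<in> space P"
   and limk: "\<forall>I\<in>II. \<forall>k\<in>{1..K}. (\<lambda>n. grp_M K II m X Y C k n \<omega> I) \<longlonglongrightarrow> measure G I * grp_H0 P (X 0) (Y 0) G k I"
   and limt: "\<forall>I\<in>II. (\<lambda>n. grp_Mtot K II m X Y C n \<omega> I) \<longlonglongrightarrow> measure G I"
   and mle: "\<And>n. Hhat n \<omega> \<in> grp_class K II m \<and>
         (\<forall>H\<in>grp_class K II m. grp_loglik K II m X Y C n \<omega> H \<le> grp_loglik K II m X Y C n \<omega> (Hhat n \<omega>))"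
   and nv: "\<And>n k. k \<in> {1..K} \<Longrightarrow>
         (\<lambda>_. Htil n \<omega> k) \<in> grp_class 1 II m \<and>
         (\<forall>h. (\<lambda>_. h) \<in> grp_class 1 II m \<longrightarrow>
              grp_loglik_naive K II m X Y C k n \<omega> h \<le> grp_loglik_naive K II m X Y C k n \<omega> (Htil n \<omega> k))"
  shows "(\<forall>I\<in>II. \<forall>k\<in>{1..K}. (\<lambda>n. Hhat n \<omega> k I) \<longlonglongrightarrow> grp_H0 P (X 0) (Y 0) G k I)
       \<and> (\<forall>I\<in>II. \<forall>k\<in>{1..K}. (\<lambda>n. Htil n \<omega> k I) \<longlonglongrightarrow> grp_H0 P (X 0) (Y 0) G k I)"
proof -
  define H0 where "H0 = (\<lambda>k I. grp_H0 P (X 0) (Y 0) G k I)"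
  define M where "M = (\<lambda>k n I. grp_M K II m X Y C k n \<omega> I)"
  define Mt where "Mt = (\<lambda>n I. grp_Mtot K II m X Y C n \<omega> I)"
  have Mt_def': "Mt n I = (\<Sum>k=1..K+1. M k n I)" for n I by (simp add: Mt_def M_def grp_Mtot_def)
  have M_nn': "0 \<le> M k n I" for k n I by (simp add: M_def M_nn)
  have limk': "\<And>I k. I \<in> II \<Longrightarrow> k \<in> {1..K} \<Longrightarrow> (\<lambda>n. M k n I) \<longlonglongrightarrow> measure G I * H0 k I"
    using limk by (simp add: M_def H0_def)
  have limt': "\<And>I. I \<in> II \<Longrightarrow> (\<lambda>n. Mt n I) \<longlonglongrightarrow> measure G I"
    using limt by (simp add: Mt_def)
  have GI: "\<And>I. I \<in> II \<Longrightarrow> 0 < measure G I" by (rule II_pos)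
  have H0_nn: "0 \<le> H0 k I" if I: "I \<in> II" and k: "k \<in> {1..K}" for I k
  proof -
    have "0 \<le> measure G I * H0 k I"
      by (rule LIMSEQ_le_const[OF limk'[OF I k]]) (use M_nn' in auto)
    then show ?thesis using GI[OF I] by (simp add: zero_le_mult_iff)
  qed
  have Mt_split: "Mt n I = (\<Sum>k=1..K. M k n I) + M (K+1) n I" for n I
    by (simp add: Mt_def M_def Mtot_split)
  have H0_sum: "(\<Sum>k=1..K. H0 k I) \<le> 1" if I: "I \<in> II" for I
  proof -
    have l1: "(\<lambda>n. \<Sum>k=1..K. M k n I) \<longlonglongrightarrow> (\<Sum>k=1..K. measure G I * H0 k I)"
      by (intro tendsto_sum limk'[OF I]) auto
    have "(\<Sum>k=1..K. measure G I * H0 k I) \<le> measure G I"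
      by (rule LIMSEQ_le[OF l1 limt'[OF I]]) (use Mt_split M_nn' in \<open>auto intro!: exI[of _ 0]\<close>)
    then have "measure G I * (\<Sum>k=1..K. H0 k I) \<le> measure G I * 1" by (simp add: sum_distrib_left)
    then show ?thesis using GI[OF I] by (simp only: mult_le_cancel_left_pos)
  qed
  have H0_le1: "H0 k I \<le> 1" if I: "I \<in> II" and k: "k \<in> {1..K}" for I k
  proof -
    have "H0 k I \<le> (\<Sum>k=1..K. H0 k I)" using k H0_nn[OF I] by (intro member_le_sum) auto
    then show ?thesis using H0_sum[OF I] by simp
  qed
  have limK1: "(\<lambda>n. M (K+1) n I) \<longlonglongrightarrow> measure G I * (1 - (\<Sum>k=1..K. H0 k I))" if I: "I \<in> II" for I
  proof -
    have "(\<lambda>n. Mt n I - (\<Sum>k=1..K. M k n I)) \<longlonglongrightarrow> measure G I - (\<Sum>k=1..K. measure G I * H0 k I)"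
      by (intro tendsto_diff tendsto_sum limt'[OF I] limk'[OF I]) auto
    moreover have "Mt n I - (\<Sum>k=1..K. M k n I) = M (K+1) n I" for n using Mt_split[of n I] by simp
    ultimately show ?thesis by (simp add: sum_distrib_left right_diff_distrib)
  qed
  have mono0: "H0 k I \<le> H0 k J" if "I \<in> II" "J \<in> II" "m I \<le> m J" for k I J
    unfolding H0_def by (rule H0_mono[OF that])

  define qM where "qM = (\<lambda>I k. grp_Hext K H0 k I)"
  define PM where "PM = (\<lambda>n I k. grp_Hext K (Hhat n \<omega>) k I)"
  define aM where "aM = (\<lambda>n I k. M k n I)"
  have aM_sum: "(\<Sum>k\<in>{1..K+1}. aM n I k) = Mt n I" for n I by (simp add: aM_def Mt_def')
  have f_S: "\<And>n. finite {I\<in>II. (\<Sum>k\<in>{1..K+1}. aM n I k) \<noteq> 0}"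
    unfolding aM_sum using S_fin by (simp add: Mt_def)
  have f_nn: "\<And>n I k. I \<in> II \<Longrightarrow> k \<in> {1..K+1} \<Longrightarrow> 0 \<le> aM n I k" by (simp add: aM_def M_nn')
  have f_sum: "\<And>n F. finite F \<Longrightarrow> F \<subseteq> II \<Longrightarrow> (\<Sum>I\<in>F. \<Sum>k\<in>{1..K+1}. aM n I k) \<le> 1"
    unfolding aM_sum Mt_def using a_sum[OF \<omega>s] by simp
  have f_lim: "\<And>I k. I \<in> II \<Longrightarrow> k \<in> {1..K+1} \<Longrightarrow> (\<lambda>n. aM n I k) \<longlonglongrightarrow> measure G I * qM I k"
  proof -
    fix I k assume I: "I \<in> II" and k: "k \<in> {1..K+1}"
    show "(\<lambda>n. aM n I k) \<longlonglongrightarrow> measure G I * qM I k"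
    proof (cases "k = K + 1")
      case True then show ?thesis using limK1[OF I] by (simp add: aM_def qM_def grp_Hext_def)
    next
      case False then have "k \<in> {1..K}" using k by auto
      then show ?thesis using limk'[OF I] False by (simp add: aM_def qM_def grp_Hext_def)
    qed
  qed
  have f_qnn: "\<And>I k. I \<in> II \<Longrightarrow> k \<in> {1..K+1} \<Longrightarrow> 0 \<le> qM I k"
    using H0_nn H0_sum by (auto simp: qM_def grp_Hext_def)
  have f_qsum: "\<And>I. I \<in> II \<Longrightarrow> (\<Sum>k\<in>{1..K+1}. qM I k) = 1"
    unfolding qM_def by (rule Hext_sum)
  have hclass: "Hhat n \<omega> \<in> grp_class K II m" for n using mle[of n] by blast
  have f_Pnn: "\<And>n I k. I \<in> II \<Longrightarrow> k \<in> {1..K+1} \<Longrightarrow> 0 \<le> PM n I k"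
    using hclass by (auto simp: PM_def grp_Hext_def grp_class_def)
  have f_Psum: "\<And>n I. I \<in> II \<Longrightarrow> (\<Sum>k\<in>{1..K+1}. PM n I k) = 1"
    unfolding PM_def by (rule Hext_sum)
  have f_opt: "\<And>n \<epsilon>. 0 < \<epsilon> \<Longrightarrow> \<epsilon> < 1 \<Longrightarrow>
      (\<Sum>I\<in>{I\<in>II. (\<Sum>k\<in>{1..K+1}. aM n I k) \<noteq> 0}. \<Sum>k\<in>{1..K+1}. xlog (aM n I k) ((1 - \<epsilon>) * qM I k + \<epsilon> / real (card {1..K+1})))
      \<le> (\<Sum>I\<in>{I\<in>II. (\<Sum>k\<in>{1..K+1}. aM n I k) \<noteq> 0}. \<Sum>k\<in>{1..K+1}. xlog (aM n I k) (PM n I k))"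
  proof -
    fix n :: nat and \<epsilon> :: real assume e0: "0 < \<epsilon>" and e1: "\<epsilon> < 1"
    define He where "He = (\<lambda>k I. (1 - \<epsilon>) * H0 k I + \<epsilon> / real (K + 1))"
    have Hec: "He \<in> grp_class K II m"
      unfolding grp_class_def
    proof (intro CollectI conjI ballI impI)
      fix k I assume "k \<in> {1..K}" "I \<in> II"
      then show "0 \<le> He k I" using H0_nn e1 e0 by (simp add: He_def)
    next
      fix k I J assume "k \<in> {1..K}" "I \<in> II" "J \<in> II" "m I \<le> m J"
      then show "He k I \<le> He k J" using mono0 e1 by (simp add: He_def mult_left_mono)
    next
      fix I assume I: "I \<in> II"
      have "(\<Sum>k=1..K. He k I) = (1 - \<epsilon>) * (\<Sum>k=1..K. H0 k I) + real K * (\<epsilon> / real (K + 1))"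
        by (simp add: He_def sum.distrib sum_distrib_left)
      also have "\<dots> \<le> (1 - \<epsilon>) * 1 + 1 * \<epsilon>"
      proof (rule add_mono)
        show "(1 - \<epsilon>) * (\<Sum>k=1..K. H0 k I) \<le> (1 - \<epsilon>) * 1" using H0_sum[OF I] e1 by (intro mult_left_mono) auto
        have "real K * (\<epsilon> / real (K + 1)) = (real K / real (K + 1)) * \<epsilon>" by simp
        also have "\<dots> \<le> 1 * \<epsilon>" using e0 by (intro mult_right_mono) auto
        finally show "real K * (\<epsilon> / real (K + 1)) \<le> 1 * \<epsilon>" .
      qed
      finally show "(\<Sum>k=1..K. He k I) \<le> 1" by simp
    qed
    have le: "grp_loglik K II m X Y C n \<omega> He \<le> grp_loglik K II m X Y C n \<omega> (Hhat n \<omega>)"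
      using mle[of n] Hec by blast
    have eq1: "grp_loglik K II m X Y C n \<omega> He =
      (\<Sum>I\<in>{I\<in>II. (\<Sum>k\<in>{1..K+1}. aM n I k) \<noteq> 0}. \<Sum>k\<in>{1..K+1}. xlog (aM n I k) ((1 - \<epsilon>) * qM I k + \<epsilon> / real (card {1..K+1})))"
      unfolding grp_loglik_def aM_sum
    proof (intro sum.cong refl)
      fix I k assume "k \<in> {1..K+1}"
      then have hl: "grp_Hext K He k I = (1 - \<epsilon>) * qM I k + \<epsilon> / real (card {1..K+1})"
        unfolding He_def qM_def by (rule Hext_lin)
      show "xlog (grp_M K II m X Y C k n \<omega> I) (grp_Hext K He k I) = xlog (aM n I k) ((1 - \<epsilon>) * qM I k + \<epsilon> / real (card {1..K+1}))"
        by (simp only: hl aM_def M_def)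
    qed (simp add: Mt_def)
    have eq2: "grp_loglik K II m X Y C n \<omega> (Hhat n \<omega>) =
      (\<Sum>I\<in>{I\<in>II. (\<Sum>k\<in>{1..K+1}. aM n I k) \<noteq> 0}. \<Sum>k\<in>{1..K+1}. xlog (aM n I k) (PM n I k))"
      unfolding grp_loglik_def aM_sum by (simp add: PM_def aM_def M_def Mt_def)
    show "(\<Sum>I\<in>{I\<in>II. (\<Sum>k\<in>{1..K+1}. aM n I k) \<noteq> 0}. \<Sum>k\<in>{1..K+1}. xlog (aM n I k) ((1 - \<epsilon>) * qM I k + \<epsilon> / real (card {1..K+1})))
      \<le> (\<Sum>I\<in>{I\<in>II. (\<Sum>k\<in>{1..K+1}. aM n I k) \<noteq> 0}. \<Sum>k\<in>{1..K+1}. xlog (aM n I k) (PM n I k))"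
      using le eq1 eq2 by simp
  qed
  have part1: "\<forall>I\<in>II. \<forall>k\<in>{1..K}. (\<lambda>n. Hhat n \<omega> k I) \<longlonglongrightarrow> grp_H0 P (X 0) (Y 0) G k I"
  proof (intro ballI)
    fix I k assume I: "I \<in> II" and k: "k \<in> {1..K}"
    have "(\<lambda>n. PM n I k) \<longlonglongrightarrow> qM I k"
      by (rule det_consist[where a=aM and Ph=PM and q=qM and g="\<lambda>I. measure G I" and II=II and KS="{1..K+1}",
            OF _ _ f_S f_nn f_sum f_lim GI g_full f_qnn f_qsum f_Pnn f_Psum f_opt I]) (use k in auto)
    then show "(\<lambda>n. Hhat n \<omega> k I) \<longlonglongrightarrow> grp_H0 P (X 0) (Y 0) G k I"
      using k by (simp add: PM_def qM_def grp_Hext_def H0_def)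
  qed

  have part2: "\<forall>I\<in>II. \<forall>k\<in>{1..K}. (\<lambda>n. Htil n \<omega> k I) \<longlonglongrightarrow> grp_H0 P (X 0) (Y 0) G k I"
  proof (intro ballI)
    fix I0 k assume I0: "I0 \<in> II" and k: "k \<in> {1..K}"
    define aN where "aN = (\<lambda>n I (j::nat). if j = 1 then M k n I else Mt n I - M k n I)"
    define qN where "qN = (\<lambda>I (j::nat). if j = 1 then H0 k I else 1 - H0 k I)"
    define PN where "PN = (\<lambda>n I (j::nat). if j = 1 then Htil n \<omega> k I else 1 - Htil n \<omega> k I)"
    have aN_sum: "(\<Sum>j\<in>{1::nat,2}. aN n I j) = Mt n I" for n I by (simp add: aN_def)
    have Mk_le: "M k n I \<le> Mt n I" for n I
      unfolding Mt_def' using k M_nn' by (intro member_le_sum) auto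
    have g_S: "\<And>n. finite {I\<in>II. (\<Sum>j\<in>{1::nat,2}. aN n I j) \<noteq> 0}"
      unfolding aN_sum using S_fin by (simp add: Mt_def)
    have g_nn: "\<And>n I j. I \<in> II \<Longrightarrow> j \<in> {1::nat,2} \<Longrightarrow> 0 \<le> aN n I j"
      using Mk_le M_nn' by (auto simp: aN_def)
    have g_sum: "\<And>n F. finite F \<Longrightarrow> F \<subseteq> II \<Longrightarrow> (\<Sum>I\<in>F. \<Sum>j\<in>{1::nat,2}. aN n I j) \<le> 1"
      unfolding aN_sum Mt_def using a_sum[OF \<omega>s] by simp
    have g_lim: "\<And>I j. I \<in> II \<Longrightarrow> j \<in> {1::nat,2} \<Longrightarrow> (\<lambda>n. aN n I j) \<longlonglongrightarrow> measure G I * qN I j"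
    proof -
      fix I j assume I: "I \<in> II" and j: "j \<in> {1::nat,2}"
      show "(\<lambda>n. aN n I j) \<longlonglongrightarrow> measure G I * qN I j"
      proof (cases "j = 1")
        case True then show ?thesis using limk'[OF I k] by (simp add: aN_def qN_def)
      next
        case False
        have "(\<lambda>n. Mt n I - M k n I) \<longlonglongrightarrow> measure G I - measure G I * H0 k I"
          by (intro tendsto_diff limt'[OF I] limk'[OF I k])
        then show ?thesis using False by (simp add: aN_def qN_def right_diff_distrib)
      qed
    qed
    have g_qnn: "\<And>I j. I \<in> II \<Longrightarrow> j \<in> {1::nat,2} \<Longrightarrow> 0 \<le> qN I j"
      using H0_nn[OF _ k] H0_le1[OF _ k] by (auto simp: qN_def)
    have g_qsum: "\<And>I. I \<in> II \<Longrightarrow> (\<Sum>j\<in>{1::nat,2}. qN I j) = 1" by (simp add: qN_def)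
    have tclass: "(\<lambda>_. Htil n \<omega> k) \<in> grp_class 1 II m" for n using nv[OF k, of n] by blast
    have t01: "0 \<le> Htil n \<omega> k I" "Htil n \<omega> k I \<le> 1" if "I \<in> II" for n I
      using tclass[of n] that by (auto simp: grp_class_def)
    have g_Pnn: "\<And>n I j. I \<in> II \<Longrightarrow> j \<in> {1::nat,2} \<Longrightarrow> 0 \<le> PN n I j"
      using t01 by (auto simp: PN_def)
    have g_Psum: "\<And>n I. I \<in> II \<Longrightarrow> (\<Sum>j\<in>{1::nat,2}. PN n I j) = 1" by (simp add: PN_def)
    have g_opt: "\<And>n \<epsilon>. 0 < \<epsilon> \<Longrightarrow> \<epsilon> < 1 \<Longrightarrow>
      (\<Sum>I\<in>{I\<in>II. (\<Sum>j\<in>{1::nat,2}. aN n I j) \<noteq> 0}. \<Sum>j\<in>{1::nat,2}. xlog (aN n I j) ((1 - \<epsilon>) * qN I j + \<epsilon> / real (card {1::nat,2})))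
      \<le> (\<Sum>I\<in>{I\<in>II. (\<Sum>j\<in>{1::nat,2}. aN n I j) \<noteq> 0}. \<Sum>j\<in>{1::nat,2}. xlog (aN n I j) (PN n I j))"
    proof -
      fix n :: nat and \<epsilon> :: real assume e0: "0 < \<epsilon>" and e1: "\<epsilon> < 1"
      define he where "he = (\<lambda>I. (1 - \<epsilon>) * H0 k I + \<epsilon> / 2)"
      have hec: "(\<lambda>_. he) \<in> grp_class 1 II m"
        unfolding grp_class_def
      proof (intro CollectI conjI ballI impI)
        fix k' I assume "k' \<in> {1..1::nat}" "I \<in> II"
        then show "0 \<le> he I" using H0_nn[OF _ k] e1 e0 by (simp add: he_def)
      next
        fix k' I J assume "k' \<in> {1..1::nat}" "I \<in> II" "J \<in> II" "m I \<le> m J"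
        then show "he I \<le> he J" using mono0 e1 by (simp add: he_def mult_left_mono)
      next
        fix I assume I: "I \<in> II"
        have "(1 - \<epsilon>) * H0 k I \<le> (1 - \<epsilon>) * 1" using H0_le1[OF I k] e1 by (intro mult_left_mono) auto
        then show "(\<Sum>k'=1..1::nat. he I) \<le> 1" using e0 by (simp add: he_def)
      qed
      have le: "grp_loglik_naive K II m X Y C k n \<omega> he \<le> grp_loglik_naive K II m X Y C k n \<omega> (Htil n \<omega> k)"
        using nv[OF k, of n] hec by blast
      have eq1: "grp_loglik_naive K II m X Y C k n \<omega> he =
        (\<Sum>I\<in>{I\<in>II. (\<Sum>j\<in>{1::nat,2}. aN n I j) \<noteq> 0}. \<Sum>j\<in>{1::nat,2}. xlog (aN n I j) ((1 - \<epsilon>) * qN I j + \<epsilon> / real (card {1::nat,2})))"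
        unfolding grp_loglik_naive_def aN_sum
      proof (intro sum.cong refl)
        fix I
        have s2: "(\<Sum>j\<in>{1::nat,2}. F j) = F 1 + F 2" for F :: "nat \<Rightarrow> ereal" by simp
        have e1: "(1 - \<epsilon>) * qN I 1 + \<epsilon> / real (card {1::nat,2}) = he I" by (simp add: qN_def he_def)
        have e2: "(1 - \<epsilon>) * qN I 2 + \<epsilon> / real (card {1::nat,2}) = 1 - he I" by (simp add: qN_def he_def algebra_simps)
        have a1: "aN n I 1 = grp_M K II m X Y C k n \<omega> I" by (simp add: aN_def M_def)
        have a2: "aN n I 2 = grp_Mtot K II m X Y C n \<omega> I - grp_M K II m X Y C k n \<omega> I" by (simp add: aN_def M_def Mt_def)
        show "xlog (grp_M K II m X Y C k n \<omega> I) (he I) + xlog (grp_Mtot K II m X Y C n \<omega> I - grp_M K II m X Y C k n \<omega> I) (1 - he I)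
          = (\<Sum>j\<in>{1::nat,2}. xlog (aN n I j) ((1 - \<epsilon>) * qN I j + \<epsilon> / real (card {1::nat,2})))"
          by (simp only: s2 e1 e2 a1 a2)
      qed (simp add: Mt_def)
      have eq2: "grp_loglik_naive K II m X Y C k n \<omega> (Htil n \<omega> k) =
        (\<Sum>I\<in>{I\<in>II. (\<Sum>j\<in>{1::nat,2}. aN n I j) \<noteq> 0}. \<Sum>j\<in>{1::nat,2}. xlog (aN n I j) (PN n I j))"
        unfolding grp_loglik_naive_def aN_sum
      proof (intro sum.cong refl)
        fix I
        have s2: "(\<Sum>j\<in>{1::nat,2}. F j) = F 1 + F 2" for F :: "nat \<Rightarrow> ereal" by simp
        have e1: "PN n I 1 = Htil n \<omega> k I" "PN n I 2 = 1 - Htil n \<omega> k I" by (simp_all add: PN_def)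
        have a1: "aN n I 1 = grp_M K II m X Y C k n \<omega> I" by (simp add: aN_def M_def)
        have a2: "aN n I 2 = grp_Mtot K II m X Y C n \<omega> I - grp_M K II m X Y C k n \<omega> I" by (simp add: aN_def M_def Mt_def)
        show "xlog (grp_M K II m X Y C k n \<omega> I) (Htil n \<omega> k I) + xlog (grp_Mtot K II m X Y C n \<omega> I - grp_M K II m X Y C k n \<omega> I) (1 - Htil n \<omega> k I)
          = (\<Sum>j\<in>{1::nat,2}. xlog (aN n I j) (PN n I j))"
          by (simp only: s2 e1 a1 a2)
      qed (simp add: Mt_def)
      show "(\<Sum>I\<in>{I\<in>II. (\<Sum>j\<in>{1::nat,2}. aN n I j) \<noteq> 0}. \<Sum>j\<in>{1::nat,2}. xlog (aN n I j) ((1 - \<epsilon>) * qN I j + \<epsilon> / real (card {1::nat,2})))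
        \<le> (\<Sum>I\<in>{I\<in>II. (\<Sum>j\<in>{1::nat,2}. aN n I j) \<noteq> 0}. \<Sum>j\<in>{1::nat,2}. xlog (aN n I j) (PN n I j))"
        using le eq1 eq2 by simp
    qed
    have "(\<lambda>n. PN n I0 1) \<longlonglongrightarrow> qN I0 1"
      by (rule det_consist[where a=aN and Ph=PN and q=qN and g="\<lambda>I. measure G I" and II=II and KS="{1::nat,2}",
            OF _ _ g_S g_nn g_sum g_lim GI g_full g_qnn g_qsum g_Pnn g_Psum g_opt I0]) auto
    then show "(\<lambda>n. Htil n \<omega> k I0) \<longlonglongrightarrow> grp_H0 P (X 0) (Y 0) G k I0"
      by (simp add: PN_def qN_def H0_def)
  qed
  show ?thesis using part1 part2 by blast
qed


lemma AE_consist: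
  fixes Hhat Htil :: "nat \<Rightarrow> 'a \<Rightarrow> nat \<Rightarrow> real set \<Rightarrow> real"
  assumes mle: "\<And>n \<omega>. \<omega> \<in> space P \<Longrightarrow> Hhat n \<omega> \<in> grp_class K II m \<and>
         (\<forall>H\<in>grp_class K II m. grp_loglik K II m X Y C n \<omega> H \<le> grp_loglik K II m X Y C n \<omega> (Hhat n \<omega>))"
   and nv: "\<And>n \<omega> k. \<omega> \<in> space P \<Longrightarrow> k \<in> {1..K} \<Longrightarrow>
         (\<lambda>_. Htil n \<omega> k) \<in> grp_class 1 II m \<and>
         (\<forall>h. (\<lambda>_. h) \<in> grp_class 1 II m \<longrightarrow>
              grp_loglik_naive K II m X Y C k n \<omega> h \<le> grp_loglik_naive K II m X Y C k n \<omega> (Htil n \<omega> k))"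
  shows "AE \<omega> in P. (\<forall>I\<in>II. \<forall>k\<in>{1..K}. (\<lambda>n. Hhat n \<omega> k I) \<longlonglongrightarrow> grp_H0 P (X 0) (Y 0) G k I)
       \<and> (\<forall>I\<in>II. \<forall>k\<in>{1..K}. (\<lambda>n. Htil n \<omega> k I) \<longlonglongrightarrow> grp_H0 P (X 0) (Y 0) G k I)"
  using AE_good
proof (rule AE_mp, intro AE_I2 impI)
  fix \<omega> assume \<omega>s: "\<omega> \<in> space P" and good: "(\<forall>i. C i \<omega> \<in> \<Union>II) \<and>
     (\<forall>I\<in>II. \<forall>k\<in>{1..K}. (\<lambda>n. (1 / real n) * (\<Sum>i<n. fD k I (tri i \<omega>))) \<longlonglongrightarrow> measure G I * grp_H0 P (X 0) (Y 0) G k I) \<and>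
     (\<forall>I\<in>II. (\<lambda>n. (1 / real n) * (\<Sum>i<n. indicator I (C i \<omega>))) \<longlonglongrightarrow> measure G I)"
  then have Cin: "\<forall>i. C i \<omega> \<in> \<Union>II" by blast
  have limk: "\<forall>I\<in>II. \<forall>k\<in>{1..K}. (\<lambda>n. grp_M K II m X Y C k n \<omega> I) \<longlonglongrightarrow> measure G I * grp_H0 P (X 0) (Y 0) G k I"
    using good by (simp add: M_eq_avg[OF Cin])
  have limt: "\<forall>I\<in>II. (\<lambda>n. grp_Mtot K II m X Y C n \<omega> I) \<longlonglongrightarrow> measure G I"
    using good by (simp add: Mtot_eq_avg[OF \<omega>s Cin])
  show "(\<forall>I\<in>II. \<forall>k\<in>{1..K}. (\<lambda>n. Hhat n \<omega> k I) \<longlonglongrightarrow> grp_H0 P (X 0) (Y 0) G k I)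
       \<and> (\<forall>I\<in>II. \<forall>k\<in>{1..K}. (\<lambda>n. Htil n \<omega> k I) \<longlonglongrightarrow> grp_H0 P (X 0) (Y 0) G k I)"
    by (rule consist_omega[where Hhat=Hhat and Htil=Htil and \<omega>=\<omega>, OF \<omega>s limk limt mle[OF \<omega>s] nv[OF \<omega>s]])
qed

end

theorem theorem2:
  fixes P :: "'a measure" and K :: nat
    and X :: "nat \<Rightarrow> 'a \<Rightarrow> real" and Y :: "nat \<Rightarrow> 'a \<Rightarrow> nat" and C :: "nat \<Rightarrow> 'a \<Rightarrow> real"
    and G :: "real measure"
    and II :: "real set set" and m :: "real set \<Rightarrow> real"
    and Hhat :: "nat \<Rightarrow> 'a \<Rightarrow> nat \<Rightarrow> real set \<Rightarrow> real"
    and Htil :: "nat \<Rightarrow> 'a \<Rightarrow> nat \<Rightarrow> real set \<Rightarrow> real"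
  assumes P: "prob_space P"
    and K: "K \<ge> 1"
    and X_meas: "\<And>i. X i \<in> borel_measurable P"
    and Y_meas: "\<And>i. Y i \<in> measurable P (count_space UNIV)"
    and C_meas: "\<And>i. C i \<in> borel_measurable P"
    and Y_range: "\<And>i \<omega>. \<omega> \<in> space P \<Longrightarrow> Y i \<omega> \<in> {1..K}"
    and indep: "prob_space.indep_vars P (\<lambda>_. borel \<Otimes>\<^sub>M count_space UNIV \<Otimes>\<^sub>M borel)
                  (\<lambda>i \<omega>. (X i \<omega>, Y i \<omega>, C i \<omega>)) UNIV"
    and ident: "\<And>i. distr P (borel \<Otimes>\<^sub>M count_space UNIV \<Otimes>\<^sub>M borel) (\<lambda>\<omega>. (X i \<omega>, Y i \<omega>, C i \<omega>))
                   = distr P (borel \<Otimes>\<^sub>M count_space UNIV \<Otimes>\<^sub>M borel) (\<lambda>\<omega>. (X 0 \<omega>, Y 0 \<omega>, C 0 \<omega>))"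
    and C_indep: "\<And>i. prob_space.indep_set P
           {(\<lambda>\<omega>. (X i \<omega>, Y i \<omega>)) -` A \<inter> space P | A. A \<in> sets (borel \<Otimes>\<^sub>M count_space UNIV)}
           {C i -` B \<inter> space P | B. B \<in> sets borel}"
    and G: "G = distr P borel (C 0)"
    and II_countable: "countable II"
    and II_interval: "\<And>I. I \<in> II \<Longrightarrow> is_interval I"
    and II_disjoint: "disjoint II"
    and II_pos: "\<And>I. I \<in> II \<Longrightarrow> measure G I > 0"
    and II_full: "measure G (\<Union>II) = 1"
    and m_in: "\<And>I. I \<in> II \<Longrightarrow> m I \<in> I"
    and m_inj: "inj_on m II"
    and Hhat_mle: "\<And>n \<omega>. \<omega> \<in> space P \<Longrightarrow>
         Hhat n \<omega> \<in> grp_class K II m \<and>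
         (\<forall>H\<in>grp_class K II m. grp_loglik K II m X Y C n \<omega> H \<le> grp_loglik K II m X Y C n \<omega> (Hhat n \<omega>))"
    and Htil_naive: "\<And>n \<omega> k. \<omega> \<in> space P \<Longrightarrow> k \<in> {1..K} \<Longrightarrow>
         (\<lambda>_. Htil n \<omega> k) \<in> grp_class 1 II m \<and>
         (\<forall>h. (\<lambda>_. h) \<in> grp_class 1 II m \<longrightarrow>
              grp_loglik_naive K II m X Y C k n \<omega> h \<le> grp_loglik_naive K II m X Y C k n \<omega> (Htil n \<omega> k))"
  shows "(AE \<omega> in P. \<forall>I\<in>II. \<forall>k\<in>{1..K}.
            (\<lambda>n. Hhat n \<omega> k I) \<longlonglongrightarrow> grp_H0 P (X 0) (Y 0) G k I)
       \<and> (AE \<omega> in P. \<forall>I\<in>II. \<forall>k\<in>{1..K}.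
            (\<lambda>n. Htil n \<omega> k I) \<longlonglongrightarrow> grp_H0 P (X 0) (Y 0) G k I)"
  proof -
  interpret grp_setting P K X Y C G II m
    by (rule grp_setting.intro) (fact assms)+
  have "AE \<omega> in P. (\<forall>I\<in>II. \<forall>k\<in>{1..K}. (\<lambda>n. Hhat n \<omega> k I) \<longlonglongrightarrow> grp_H0 P (X 0) (Y 0) G k I)
       \<and> (\<forall>I\<in>II. \<forall>k\<in>{1..K}. (\<lambda>n. Htil n \<omega> k I) \<longlonglongrightarrow> grp_H0 P (X 0) (Y 0) G k I)"
    by (rule AE_consist[OF Hhat_mle Htil_naive])
  then show ?thesis by (rule eventually_conj_iff[THEN iffD1])
qed

end
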